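(* Let $b_+,b_->0$, $\delta_\pm\in\mathbb R$ with $b_\pm+\delta_\pm>0$, $c>0$, and $k\in[-\pi,\pi)$, and assume that either $k\neq 0$ or both $\delta_+\neq0$ and $\delta_-\ne0$. Let $v_1(b_+,\delta_+,k)$ be an eigenvector of $P(b_+,\delta_+,k)$ for its eigenvalue $\lambda_1$ of modulus less than $1$, and $v_2(b_-,\delta_-,k)$ an eigenvector of $P(b_-,\delta_-,k)$ for its eigenvalue $\lambda_2$ of modulus greater than $1$. Then $0$ is a two-fold eigenvalue of the type-I interface Hamiltonian $\hat H_{\mathrm I}(k)$ (its eigenspace in $\ell^2(\mathbb Z;\mathbb C^6)$ is two-dimensional) if and only if there is a nonzero constant $g\in\mathbb C$ with $$\begin{pmatrix}1&0\\0&\frac{(b_++\delta_+)(b_-+\delta_-)}{c^2}\end{pmatrix}v_1(b_+,\delta_+,k)=g\,v_2(b_-,\delta_-,k).$$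
   Context: Matrices: for $b>0$, $b+\varepsilon>0$, $k\in\mathbb R$ let $A_1=\begin{pmatrix}-b&0\\-b&-(b+\varepsilon)e^{-ik}\end{pmatrix}$, $A_2=\begin{pmatrix}-b&-(b+\varepsilon)e^{ik}\\0&-b\end{pmatrix}$, $A_3=\begin{pmatrix}-(b+\varepsilon)e^{-ik}&0\\-b&-b\end{pmatrix}$, $A_4=\begin{pmatrix}-b&-b\\0&-(b+\varepsilon)\end{pmatrix}$, $A_5=\begin{pmatrix}-b&0\\-(b+\varepsilon)e^{ik}&-b\end{pmatrix}$, $A_6=\begin{pmatrix}-(b+\varepsilon)&-b\\0&-b\end{pmatrix}$, and $P(b,\varepsilon,k)=-A_6^{-1}A_5A_4^{-1}A_3A_2^{-1}A_1$; when $k\ne0$ or $\varepsilon\neq0$ it has two distinct eigenvalues $\lambda_1,\lambda_2$ with $0<|\lambda_1|<1<|\lambda_2|$. Operator: for $n\in\mathbb Z$ let $b_n=b_+$ ($n\ge0$), $b_n=b_-$ ($n\le-1$); $c_n=b_++\delta_+$ ($n\ge0$), $c_{-1}=c$, $c_n=b_-+\delta_-$ ($n\le-2$); $d_n=b_++\delta_+$ ($n\ge0$), $d_n=b_-+\delta_-$ ($n\le-1$). $\hat H_{\mathrm I}(k)$ acts on $u=\{(u_{j,n})_{j=1}^6\}_{n\in\mathbb Z}\in\ell^2(\mathbb Z;\mathbb C^6)$ by $(\hat H_{\mathrm I}(k)u)_{1,n}=-b_nu_{4,n}-b_nu_{5,n}-c_{n-1}e^{-ik}u_{6,n-1}$,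 $(\hat H_{\mathrm I}(k)u)_{2,n}=-b_nu_{4,n}-d_ne^{ik}u_{5,n}-b_nu_{6,n}$, $(\hat H_{\mathrm I}(k)u)_{3,n}=-c_nu_{4,n+1}-b_nu_{5,n}-b_nu_{6,n}$, $(\hat H_{\mathrm I}(k)u)_{4,n}=-b_nu_{1,n}-b_nu_{2,n}-c_{n-1}u_{3,n-1}$, $(\hat H_{\mathrm I}(k)u)_{5,n}=-b_nu_{1,n}-d_ne^{-ik}u_{2,n}-b_nu_{3,n}$, $(\hat H_{\mathrm I}(k)u)_{6,n}=-c_ne^{ik}u_{1,n+1}-b_nu_{2,n}-b_nu_{3,n}$. *)

theory Defs
  imports "HOL-Analysis.Analysis"
begin

definition mat2 :: "complex \<Rightarrow> complex \<Rightarrow> complex \<Rightarrow> complex \<Rightarrow> complex^2^2" where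
  "mat2 a b c d = (\<chi> i j. if i = 1 then (if j = 1 then a else b) else (if j = 1 then c else d))"

definition A1 :: "real \<Rightarrow> real \<Rightarrow> real \<Rightarrow> complex^2^2" where
  "A1 b e k = mat2 (- of_real b) 0 (- of_real b) (- of_real (b + e) * cis (- k))"
definition A2 :: "real \<Rightarrow> real \<Rightarrow> real \<Rightarrow> complex^2^2" where
  "A2 b e k = mat2 (- of_real b) (- of_real (b + e) * cis k) 0 (- of_real b)"
definition A3 :: "real \<Rightarrow> real \<Rightarrow> real \<Rightarrow> complex^2^2" where
  "A3 b e k = mat2 (- of_real (b + e) * cis (- k)) 0 (- of_real b) (- of_real b)"
definition A4 :: "real \<Rightarrow> real \<Rightarrow> real \<Rightarrow> complex^2^2" where
  "A4 b e k = mat2 (- of_real b) (- of_real b) 0 (- of_real (b + e))"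
definition A5 :: "real \<Rightarrow> real \<Rightarrow> real \<Rightarrow> complex^2^2" where
  "A5 b e k = mat2 (- of_real b) 0 (- of_real (b + e) * cis k) (- of_real b)"
definition A6 :: "real \<Rightarrow> real \<Rightarrow> real \<Rightarrow> complex^2^2" where
  "A6 b e k = mat2 (- of_real (b + e)) (- of_real b) 0 (- of_real b)"

definition Pmat :: "real \<Rightarrow> real \<Rightarrow> real \<Rightarrow> complex^2^2" where
  "Pmat b e k = - (matrix_inv (A6 b e k) ** A5 b e k ** matrix_inv (A4 b e k) ** A3 b e k
                   ** matrix_inv (A2 b e k) ** A1 b e k)"

definition bseq :: "real \<Rightarrow> real \<Rightarrow> int \<Rightarrow> real" where
  "bseq bp bm n = (if n \<ge> 0 then bp else bm)"
definition cseq :: "real \<Rightarrow> real \<Rightarrow> real \<Rightarrow> real \<Rightarrow> real \<Rightarrow> int \<Rightarrow> real" where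
  "cseq bp dp bm dm c n = (if n \<ge> 0 then bp + dp else if n = -1 then c else bm + dm)"
definition dseq :: "real \<Rightarrow> real \<Rightarrow> real \<Rightarrow> real \<Rightarrow> int \<Rightarrow> real" where
  "dseq bp dp bm dm n = (if n \<ge> 0 then bp + dp else bm + dm)"

(* Sequences in l^2(Z; C^6): u n j is the j-th component (j = 1..6) at site n;
   components outside 1..6 are required to vanish. *)
definition l2Z6 :: "(int \<Rightarrow> nat \<Rightarrow> complex) set" where
  "l2Z6 = {u. (\<forall>n j. j \<notin> {1..6} \<longrightarrow> u n j = 0) \<and>
              (\<forall>j. (\<lambda>n. (cmod (u n j))\<^sup>2) summable_on (UNIV :: int set))}"

definition HI :: "real \<Rightarrow> real \<Rightarrow> real \<Rightarrow> real \<Rightarrow> real \<Rightarrow> real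
                 \<Rightarrow> (int \<Rightarrow> nat \<Rightarrow> complex) \<Rightarrow> (int \<Rightarrow> nat \<Rightarrow> complex)" where
  "HI bp dp bm dm c k u = (\<lambda>n j.
     let b = (\<lambda>m. complex_of_real (bseq bp bm m));
         cc = (\<lambda>m. complex_of_real (cseq bp dp bm dm c m));
         d = (\<lambda>m. complex_of_real (dseq bp dp bm dm m)) in
     if j = 1 then - b n * u n 4 - b n * u n 5 - cc (n - 1) * cis (- k) * u (n - 1) 6
     else if j = 2 then - b n * u n 4 - d n * cis k * u n 5 - b n * u n 6
     else if j = 3 then - cc n * u (n + 1) 4 - b n * u n 5 - b n * u n 6
     else if j = 4 then - b n * u n 1 - b n * u n 2 - cc (n - 1) * u (n - 1) 3
     else if j = 5 then - b n * u n 1 - d n * cis (- k) * u n 2 - b n * u n 3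
     else if j = 6 then - cc n * cis k * u (n + 1) 1 - b n * u n 2 - b n * u n 3
     else 0)"

definition kerHI :: "real \<Rightarrow> real \<Rightarrow> real \<Rightarrow> real \<Rightarrow> real \<Rightarrow> real \<Rightarrow> (int \<Rightarrow> nat \<Rightarrow> complex) set" where
  "kerHI bp dp bm dm c k = {u \<in> l2Z6. HI bp dp bm dm c k u = (\<lambda>n j. 0)}"

definition cdim_two :: "(int \<Rightarrow> nat \<Rightarrow> complex) set \<Rightarrow> bool" where
  "cdim_two S \<longleftrightarrow> (\<exists>v w. v \<in> S \<and> w \<in> S \<and>
      (\<forall>a b::complex. (\<lambda>n j. a * v n j + b * w n j) = (\<lambda>n j. 0) \<longrightarrow> a = 0 \<and> b = 0) \<and>
      (\<forall>u\<in>S. \<exists>a b::complex. u = (\<lambda>n j. a * v n j + b * w n j)))"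

end

theory Submission
  imports Defs
begin

lemma mat2_mult: "mat2 a b c d ** mat2 e f g h = mat2 (a*e+b*g) (a*f+b*h) (c*e+d*g) (c*f+d*h)"
  by (simp add: vec_eq_iff forall_2 mat2_def matrix_matrix_mult_def sum_2)
lemma mat2_one: "mat 1 = mat2 1 0 0 1"
  by (simp add: vec_eq_iff forall_2 mat2_def mat_def)
lemma mat2_mv: "mat2 a b c d *v x = (\<chi> i. if i = 1 then a * x$1 + b * x$2 else c * x$1 + d * x$2)"
  by (simp add: vec_eq_iff forall_2 mat2_def matrix_vector_mult_def sum_2)
lemma mat2_det: "det (mat2 a b c d) = a*d - b*c"
  by (simp add: det_2 mat2_def)
lemma vec2_eq: "(x::'a^2) = y \<longleftrightarrow> x$1 = y$1 \<and> x$2 = y$2"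
  by (simp add: vec_eq_iff forall_2)

lemma neg_mv: "(- M) *v (x::'a::comm_ring_1^'n) = - (M *v x)"
  by (simp add: vec_eq_iff matrix_vector_mult_def sum_negf)
lemma mv_neg: "M *v (- (x::'a::comm_ring_1^'n)) = - (M *v x)"
  by (simp add: vec_eq_iff matrix_vector_mult_def sum_negf)
lemma neg_mm: "(- A) ** (B::'a::comm_ring_1^'n^'n) = - (A ** B)"
  by (simp add: vec_eq_iff matrix_matrix_mult_def sum_negf)
lemma mm_neg: "A ** (- B::'a::comm_ring_1^'n^'n) = - (A ** B)"
  by (simp add: vec_eq_iff matrix_matrix_mult_def sum_negf)

lemma inv_ok:
  assumes "A ** B = mat 1" "B ** A = mat 1"
  shows "matrix_inv A ** A = mat 1" "A ** matrix_inv A = mat 1"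
  unfolding matrix_inv_def using someI[of "\<lambda>A'. A ** A' = mat 1 \<and> A' ** A = mat 1" B] assms by auto

lemma mat2_inv:
  fixes a b c d :: complex
  assumes "a*d - b*c \<noteq> 0"
  shows "matrix_inv (mat2 a b c d) ** mat2 a b c d = mat 1" "mat2 a b c d ** matrix_inv (mat2 a b c d) = mat 1"
proof -
  define D where "D = a*d - b*c"
  have Dnz: "D \<noteq> 0" using assms by (simp add: D_def)
  let ?D = D
  have e: "a*(d/?D) + b*(-c/?D) = 1" "a*(-b/?D)+b*(a/?D) = 0" "c*(d/?D)+d*(-c/?D) = 0"
     "c*(-b/?D)+d*(a/?D)=1" "d/?D*a + (-b/?D)*c = 1" "d/?D*b + (-b/?D)*d = 0"
     "(-c/?D)*a + a/?D*c = 0" "(-c/?D)*b + a/?D*d = 1"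
    using Dnz by (simp_all add: field_simps) (simp_all add: D_def algebra_simps)
  have 1: "mat2 a b c d ** mat2 (d/?D) (-b/?D) (-c/?D) (a/?D) = mat 1"
    by (simp only: mat2_mult mat2_one e)
  have 2: "mat2 (d/?D) (-b/?D) (-c/?D) (a/?D) ** mat2 a b c d = mat 1"
    by (simp only: mat2_mult mat2_one e)
  show "matrix_inv (mat2 a b c d) ** mat2 a b c d = mat 1" "mat2 a b c d ** matrix_inv (mat2 a b c d) = mat 1"
    using inv_ok[OF 1 2] by auto
qed

lemma step_iff:
  fixes A B X :: "complex^2^2"
  assumes "X ** B = mat 1" "B ** X = mat 1"
  shows "(A *v w0 + B *v w1 = 0) = (w1 = (- (X ** A)) *v w0)"
proof
  assume h: "A *v w0 + B *v w1 = 0"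
  hence "B *v w1 = - (A *v w0)" by (simp add: eq_neg_iff_add_eq_0 add.commute)
  hence "X *v (B *v w1) = X *v (- (A *v w0))" by simp
  thus "w1 = (- (X ** A)) *v w0" using assms by (simp add: matrix_vector_mul_assoc neg_mv mv_neg)
next
  assume "w1 = (- (X ** A)) *v w0"
  hence "B *v w1 = - ((B ** X) ** A) *v w0" by (simp add: matrix_vector_mul_assoc neg_mv mv_neg matrix_mul_assoc)
  thus "A *v w0 + B *v w1 = 0" using assms by (simp add: neg_mv)
qed

definition M1 :: "real \<Rightarrow> real \<Rightarrow> real \<Rightarrow> complex^2^2" where
  "M1 b e k = - (matrix_inv (A2 b e k) ** A1 b e k)"
definition M2 :: "real \<Rightarrow> real \<Rightarrow> real \<Rightarrow> complex^2^2" where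
  "M2 b e k = - (matrix_inv (A4 b e k) ** A3 b e k)"
definition M3 :: "real \<Rightarrow> real \<Rightarrow> real \<Rightarrow> complex^2^2" where
  "M3 b e k = - (matrix_inv (A6 b e k) ** A5 b e k)"

lemma Pmat_M: "Pmat b e k *v x = M3 b e k *v (M2 b e k *v (M1 b e k *v x))"
  by (simp add: Pmat_def M1_def M2_def M3_def matrix_vector_mul_assoc neg_mv mv_neg neg_mm mm_neg matrix_mul_assoc)

lemma invs:
  assumes "b > 0" "b + e > 0"
  shows "matrix_inv (A2 b e k) ** A2 b e k = mat 1" "A2 b e k ** matrix_inv (A2 b e k) = mat 1"
    "matrix_inv (A4 b e k) ** A4 b e k = mat 1" "A4 b e k ** matrix_inv (A4 b e k) = mat 1"
    "matrix_inv (A6 b e k) ** A6 b e k = mat 1" "A6 b e k ** matrix_inv (A6 b e k) = mat 1"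
proof -
  have "complex_of_real b * complex_of_real b \<noteq> 0" "complex_of_real b * complex_of_real (b+e) \<noteq> 0"
    "complex_of_real (b+e) * complex_of_real b \<noteq> 0"
    using assms by (auto simp del: of_real_add)
  thus "matrix_inv (A2 b e k) ** A2 b e k = mat 1" "A2 b e k ** matrix_inv (A2 b e k) = mat 1"
    "matrix_inv (A4 b e k) ** A4 b e k = mat 1" "A4 b e k ** matrix_inv (A4 b e k) = mat 1"
    "matrix_inv (A6 b e k) ** A6 b e k = mat 1" "A6 b e k ** matrix_inv (A6 b e k) = mat 1"
    unfolding A2_def A4_def A6_def by (auto intro!: mat2_inv simp del: of_real_add)
qed

lemma det_Pmat:
  assumes "b > 0" "b + e > 0"
  shows "det (Pmat b e k) = cis (-k) * cis (-k)"
proof -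
  have dinv: "det (matrix_inv A) = 1 / det A" if "matrix_inv A ** A = mat 1" "det A \<noteq> 0" for A :: "complex^2^2"
    using that det_mul[of "matrix_inv A" A] by (simp add: field_simps)
  have d: "det (A1 b e k) = of_real b * of_real (b+e) * cis (-k)" "det (A2 b e k) = of_real b * of_real b"
     "det (A3 b e k) = of_real b * of_real (b+e) * cis (-k)" "det (A4 b e k) = of_real b * of_real (b+e)"
     "det (A5 b e k) = of_real b * of_real b" "det (A6 b e k) = of_real b * of_real (b+e)"
    by (simp_all add: A1_def A2_def A3_def A4_def A5_def A6_def mat2_det algebra_simps)
  have nz: "complex_of_real b \<noteq> 0" "complex_of_real b + complex_of_real e \<noteq> 0" using assms
    by (auto simp flip: of_real_add)
  have neg: "det (- A) = det (A::complex^2^2)" for A by (simp add: det_2)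
  have i: "det (matrix_inv (A2 b e k)) = 1 / det (A2 b e k)" "det (matrix_inv (A4 b e k)) = 1 / det (A4 b e k)"
    "det (matrix_inv (A6 b e k)) = 1 / det (A6 b e k)"
    by (rule dinv[OF invs(1)[OF assms]], use assms in \<open>simp add: d del: of_real_add\<close>,
        rule dinv[OF invs(3)[OF assms]], use assms in \<open>simp add: d del: of_real_add\<close>,
        rule dinv[OF invs(5)[OF assms]], use assms in \<open>simp add: d del: of_real_add\<close>)
  show ?thesis
    unfolding Pmat_def neg det_mul i d using nz assms
    by (simp add: field_simps del: of_real_add)
qed

definition vec2 :: "'a \<Rightarrow> 'a \<Rightarrow> 'a^2" where "vec2 x y = (\<chi> i. if i = 1 then x else y)"
lemma vec2_nth[simp]: "vec2 x y $ 1 = x" "vec2 x y $ 2 = y"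
  by (simp_all add: vec2_def)

lemma scal_a:
  "(A1 b e k *v w0 + A2 b e k *v w1 = 0) \<longleftrightarrow>
    (of_real b * w0$1 + of_real b * w1$1 + of_real (b+e) * cis k * w1$2 = 0 \<and>
     of_real b * w0$1 + of_real (b+e) * cis (-k) * w0$2 + of_real b * w1$2 = 0)"
  by (simp add: A1_def A2_def mat2_mv vec2_eq del: of_real_add) (auto simp: algebra_simps neg_eq_iff_add_eq_0 eq_neg_iff_add_eq_0 simp del: of_real_add)
lemma scal_b:
  "(A3 b e k *v w1 + A4 b e k *v w2 = 0) \<longleftrightarrow>
    (of_real (b+e) * cis (-k) * w1$1 + of_real b * w2$1 + of_real b * w2$2 = 0 \<and>
     of_real b * w1$1 + of_real b * w1$2 + of_real (b+e) * w2$2 = 0)"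
  by (simp add: A3_def A4_def mat2_mv vec2_eq del: of_real_add) (auto simp: algebra_simps neg_eq_iff_add_eq_0 eq_neg_iff_add_eq_0 simp del: of_real_add)
lemma scal_c:
  "(A5 b e k *v w2 + A6 b e k *v w3 = 0) \<longleftrightarrow>
    (of_real b * w2$1 + of_real (b+e) * w3$1 + of_real b * w3$2 = 0 \<and>
     of_real (b+e) * cis k * w2$1 + of_real b * w2$2 + of_real b * w3$2 = 0)"
  by (simp add: A5_def A6_def mat2_mv vec2_eq del: of_real_add) (auto simp: algebra_simps neg_eq_iff_add_eq_0 eq_neg_iff_add_eq_0 simp del: of_real_add)

lemma chain:
  fixes x0 z0 y0 z1 x1 y1 z2 x2 :: complex
  assumes "b > 0" "b + e > 0"
  and e1: "of_real b * x0 + of_real b * y0 + of_real (b+e) * cis (-k) * z0 = 0"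
  and e2: "of_real b * x0 + of_real (b+e) * cis k * y0 + of_real b * z1 = 0"
  and e3: "of_real (b+e) * x1 + of_real b * y0 + of_real b * z1 = 0"
  and e4: "of_real b * x1 + of_real b * y1 + of_real (b+e) * cis (-k) * z1 = 0"
  and e5: "of_real b * x1 + of_real (b+e) * cis k * y1 + of_real b * z2 = 0"
  and e6: "of_real (b+e) * x2 + of_real b * y1 + of_real b * z2 = 0"
  shows "Pmat b e k *v vec2 x0 z0 = vec2 x2 z2"
proof -
  have a: "A1 b e k *v vec2 x0 z0 + A2 b e k *v vec2 z1 y0 = 0"
    unfolding scal_a using e1 e2 by (simp add: algebra_simps del: of_real_add)
  have b: "A3 b e k *v vec2 z1 y0 + A4 b e k *v vec2 y1 x1 = 0"
    unfolding scal_b using e3 e4 by (simp add: algebra_simps del: of_real_add)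
  have c: "A5 b e k *v vec2 y1 x1 + A6 b e k *v vec2 x2 z2 = 0"
    unfolding scal_c using e5 e6 by (simp add: algebra_simps del: of_real_add)
  note I = invs[OF assms(1,2), of k]
  from a b c show ?thesis
    unfolding step_iff[OF I(1,2)] step_iff[OF I(3,4)] step_iff[OF I(5,6)] Pmat_M
    by (simp add: M1_def M2_def M3_def)
qed

lemma chain_rev:
  fixes v :: "complex^2" and k b e :: real
  assumes "b > 0" "b + e > 0"
  defines "w1 \<equiv> M1 b e k *v v" and "w2 \<equiv> M2 b e k *v (M1 b e k *v v)"
  defines "x0 \<equiv> v$1" and "z0 \<equiv> v$2" and "z1 \<equiv> w1$1" and "y0 \<equiv> w1$2" and "y1 \<equiv> w2$1" and "x1 \<equiv> w2$2"
  defines "x2 \<equiv> (Pmat b e k *v v)$1" and "z2 \<equiv> (Pmat b e k *v v)$2"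
  shows "of_real b * x0 + of_real b * y0 + of_real (b+e) * cis (-k) * z0 = 0"
  and "of_real b * x0 + of_real (b+e) * cis k * y0 + of_real b * z1 = 0"
  and "of_real (b+e) * x1 + of_real b * y0 + of_real b * z1 = 0"
  and "of_real b * x1 + of_real b * y1 + of_real (b+e) * cis (-k) * z1 = 0"
  and "of_real b * x1 + of_real (b+e) * cis k * y1 + of_real b * z2 = 0"
  and "of_real (b+e) * x2 + of_real b * y1 + of_real b * z2 = 0"
proof -
  note I = invs[OF assms(1,2), of k]
  have a: "A1 b e k *v v + A2 b e k *v w1 = 0"
    unfolding step_iff[OF I(1,2)] w1_def M1_def ..
  have b: "A3 b e k *v w1 + A4 b e k *v w2 = 0"
    unfolding step_iff[OF I(3,4)] w1_def w2_def M2_def ..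
  have c: "A5 b e k *v w2 + A6 b e k *v (Pmat b e k *v v) = 0"
    unfolding step_iff[OF I(5,6)] w2_def Pmat_M M3_def ..
  show "of_real b * x0 + of_real b * y0 + of_real (b+e) * cis (-k) * z0 = 0"
  and "of_real b * x0 + of_real (b+e) * cis k * y0 + of_real b * z1 = 0"
  and "of_real (b+e) * x1 + of_real b * y0 + of_real b * z1 = 0"
  and "of_real b * x1 + of_real b * y1 + of_real (b+e) * cis (-k) * z1 = 0"
  and "of_real b * x1 + of_real (b+e) * cis k * y1 + of_real b * z2 = 0"
  and "of_real (b+e) * x2 + of_real b * y1 + of_real b * z2 = 0"
    using a b c unfolding scal_a scal_b scal_c assms(3-)
    by (simp_all add: algebra_simps del: of_real_add)
qed

lemma mv2: fixes P :: "'a::semiring_1^2^2" shows "(P *v x) $ 1 = P$1$1 * x$1 + P$1$2 * x$2" "(P *v x) $ 2 = P$2$1 * x$1 + P$2$2 * x$2"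
  by (simp_all add: matrix_vector_mult_def sum_2)

lemma charpoly:
  fixes P :: "complex^2^2"
  assumes "P *v v = l *s v" "v \<noteq> 0"
  shows "l * (P$1$1 + P$2$2 - l) = det P"
proof -
  have e1: "(P$1$1 - l) * v$1 + P$1$2 * v$2 = 0" "P$2$1 * v$1 + (P$2$2 - l) * v$2 = 0"
    using assms(1) unfolding vec2_eq mv2 by (auto simp: algebra_simps)
  have "(det P - l * (P$1$1 + P$2$2 - l)) * v$1 = (P$2$2 - l) * ((P$1$1 - l) * v$1 + P$1$2 * v$2) - P$1$2 * (P$2$1 * v$1 + (P$2$2 - l) * v$2)"
     "(det P - l * (P$1$1 + P$2$2 - l)) * v$2 = (P$1$1 - l) * (P$2$1 * v$1 + (P$2$2 - l) * v$2) - P$2$1 * ((P$1$1 - l) * v$1 + P$1$2 * v$2)"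
    unfolding det_2 by (simp_all add: algebra_simps)
  hence "(det P - l * (P$1$1 + P$2$2 - l)) * v$1 = 0" "(det P - l * (P$1$1 + P$2$2 - l)) * v$2 = 0"
    using e1 by simp_all
  moreover have "v$1 \<noteq> 0 \<or> v$2 \<noteq> 0" using assms(2) vec2_eq[of v 0] by auto
  ultimately show ?thesis by auto
qed

lemma cayley:
  fixes P :: "complex^2^2"
  shows "P *v (P *v x) = (P$1$1 + P$2$2) *s (P *v x) - det P *s x"
  unfolding vec2_eq mv2 det_2 by (simp add: mv2 algebra_simps)

lemma kernel_par:
  fixes P :: "complex^2^2"
  assumes "P *v v = l *s v" "v \<noteq> 0" "P *v x = l *s x" "det P \<noteq> l * l"
  shows "\<exists>a. x = a *s v"
proof -
  have e1: "(P$1$1 - l) * v$1 + P$1$2 * v$2 = 0" "P$2$1 * v$1 + (P$2$2 - l) * v$2 = 0"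
    using assms(1) unfolding vec2_eq mv2 by (auto simp: algebra_simps)
  have e2: "(P$1$1 - l) * x$1 + P$1$2 * x$2 = 0" "P$2$1 * x$1 + (P$2$2 - l) * x$2 = 0"
    using assms(3) unfolding vec2_eq mv2 by (auto simp: algebra_simps)
  have nz: "P$1$1 - l \<noteq> 0 \<or> P$1$2 \<noteq> 0 \<or> P$2$1 \<noteq> 0 \<or> P$2$2 - l \<noteq> 0"
    using assms(4) unfolding det_2 by auto
  have f: "(P$1$1 - l) * (v$1 * x$2 - v$2 * x$1) = 0" "P$1$2 * (v$1 * x$2 - v$2 * x$1) = 0"
     "P$2$1 * (v$1 * x$2 - v$2 * x$1) = 0" "(P$2$2 - l) * (v$1 * x$2 - v$2 * x$1) = 0"
  proof -
    have "(P$1$1 - l) * (v$1 * x$2 - v$2 * x$1) = x$2 * ((P$1$1 - l) * v$1 + P$1$2 * v$2) - v$2 * ((P$1$1 - l) * x$1 + P$1$2 * x$2)"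
      by (simp add: algebra_simps)
    thus "(P$1$1 - l) * (v$1 * x$2 - v$2 * x$1) = 0" using e1 e2 by simp
    have "P$1$2 * (v$1 * x$2 - v$2 * x$1) = v$1 * ((P$1$1 - l) * x$1 + P$1$2 * x$2) - x$1 * ((P$1$1 - l) * v$1 + P$1$2 * v$2)"
      by (simp add: algebra_simps)
    thus "P$1$2 * (v$1 * x$2 - v$2 * x$1) = 0" using e1 e2 by simp
    have "P$2$1 * (v$1 * x$2 - v$2 * x$1) = x$2 * (P$2$1 * v$1 + (P$2$2 - l) * v$2) - v$2 * (P$2$1 * x$1 + (P$2$2 - l) * x$2)"
      by (simp add: algebra_simps)
    thus "P$2$1 * (v$1 * x$2 - v$2 * x$1) = 0" using e1 e2 by simp
    have "(P$2$2 - l) * (v$1 * x$2 - v$2 * x$1) = v$1 * (P$2$1 * x$1 + (P$2$2 - l) * x$2) - x$1 * (P$2$1 * v$1 + (P$2$2 - l) * v$2)"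
      by (simp add: algebra_simps)
    thus "(P$2$2 - l) * (v$1 * x$2 - v$2 * x$1) = 0" using e1 e2 by simp
  qed
  hence cr: "v$1 * x$2 = v$2 * x$1" using nz by auto
  have "v$1 \<noteq> 0 \<or> v$2 \<noteq> 0" using assms(2) vec2_eq[of v 0] by auto
  thus ?thesis
  proof
    assume h: "v$1 \<noteq> 0"
    show ?thesis by (rule exI[of _ "x$1 / v$1"]) (use h cr in \<open>auto simp: vec2_eq field_simps\<close>)
  next
    assume h: "v$2 \<noteq> 0"
    show ?thesis by (rule exI[of _ "x$2 / v$2"]) (use h cr in \<open>auto simp: vec2_eq field_simps\<close>)
  qed
qed

lemma zero_lim:
  fixes t :: "nat \<Rightarrow> complex"
  assumes "t \<longlonglongrightarrow> 0" "\<And>m. cmod (t 0) \<le> cmod (t m)"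
  shows "t 0 = 0"
proof -
  have "(\<lambda>m. cmod (t m)) \<longlonglongrightarrow> 0" using assms(1) by (simp add: tendsto_norm_zero)
  hence "cmod (t 0) \<le> 0" by (rule LIMSEQ_le_const) (use assms(2) in auto)
  thus ?thesis by simp
qed

lemma PT_key:
  fixes P :: "complex^2^2"
  assumes "l * mu = det P" "mu = P$1$1 + P$2$2 - l"
  shows "P *v (P *v x - l *s x) = mu *s (P *v x - l *s x)"
proof -
  have "(P *v (P *v x - l *s x))$1 - (mu *s (P *v x - l *s x))$1 = x$1 * (l*mu - det P)"
       "(P *v (P *v x - l *s x))$2 - (mu *s (P *v x - l *s x))$2 = x$2 * (l*mu - det P)"
    by (simp_all add: mv2 det_2 assms(2) algebra_simps)
  thus ?thesis using assms(1) by (simp add: vec2_eq)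
qed

lemma PT_lin:
  fixes P :: "complex^2^2"
  shows "P *v (P *v x) - l *s (P *v x) = P *v (P *v x - l *s x)"
  by (simp add: vec2_eq mv2 algebra_simps)

lemma t_lim:
  fixes P :: "complex^2^2" and s :: "nat \<Rightarrow> complex^2"
  assumes "\<And>i. (\<lambda>m. s m $ i) \<longlonglongrightarrow> 0"
  shows "(\<lambda>m. (P *v s m - l *s s m) $ i) \<longlonglongrightarrow> 0"
proof -
  have a: "(\<lambda>m. s m $ 1) \<longlonglongrightarrow> 0" "(\<lambda>m. s m $ 2) \<longlonglongrightarrow> 0" using assms by auto
  have "(\<lambda>m. (P *v s m - l *s s m) $ 1) \<longlonglongrightarrow> 0" "(\<lambda>m. (P *v s m - l *s s m) $ 2) \<longlonglongrightarrow> 0"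
    unfolding vector_minus_component vector_smult_component mv2
    using tendsto_diff[OF tendsto_add[OF tendsto_mult[OF tendsto_const a(1)] tendsto_mult[OF tendsto_const a(2)]] tendsto_mult[OF tendsto_const a(1)], of "P$1$1" "P$1$2" l]
      tendsto_diff[OF tendsto_add[OF tendsto_mult[OF tendsto_const a(1)] tendsto_mult[OF tendsto_const a(2)]] tendsto_mult[OF tendsto_const a(2)], of "P$2$1" "P$2$2" l]
    by simp_all
  thus ?thesis using exhaust_2[of i] by auto
qed

lemma decay_common:
  fixes P :: "complex^2^2"
  assumes "cmod (det P) = 1" "P *v v = l *s v" "v \<noteq> 0" "cmod l \<noteq> 1" "P *v s0 - l *s s0 = 0"
  shows "\<exists>a. s0 = a *s v"
proof -
  have "det P \<noteq> l * l"
  proof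
    assume "det P = l * l"
    hence "cmod l * cmod l = 1" using assms(1) by (simp add: norm_mult)
    hence "cmod l = 1" by (metis abs_norm_cancel abs_square_eq_1 power2_eq_square)
    thus False using assms(4) by simp
  qed
  moreover have "P *v s0 = l *s s0" using assms(5) by simp
  ultimately show ?thesis using kernel_par assms(2,3) by blast
qed

lemma decay_right:
  fixes P :: "complex^2^2" and s :: "nat \<Rightarrow> complex^2"
  assumes "cmod (det P) = 1" "P *v v = l *s v" "v \<noteq> 0" "cmod l < 1"
    "\<And>m. s (Suc m) = P *v s m" "\<And>i. (\<lambda>m. s m $ i) \<longlonglongrightarrow> 0"
  shows "\<exists>a. s 0 = a *s v"
proof -
  define mu where "mu = P$1$1 + P$2$2 - l"
  have lm: "l * mu = det P" using charpoly[OF assms(2,3)] by (simp add: mu_def)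
  hence "cmod l * cmod mu = 1" using assms(1) by (metis norm_mult)
  moreover have "cmod l * cmod mu \<le> cmod l" if "cmod mu \<le> 1"
    using that mult_left_mono[of "cmod mu" 1 "cmod l"] by simp
  ultimately have mu1: "cmod mu \<ge> 1" using assms(4) by linarith
  define t where "t m = P *v s m - l *s s m" for m
  have ts: "t (Suc m) = mu *s t m" for m
    unfolding t_def assms(5) PT_lin PT_key[OF lm mu_def] ..
  have tp: "t m = mu ^ m *s t 0" for m
    by (induction m) (simp_all add: ts)
  have "t 0 $ i = 0" for i
  proof (rule zero_lim[of "\<lambda>m. t m $ i"])
    show "(\<lambda>m. t m $ i) \<longlonglongrightarrow> 0" unfolding t_def by (rule t_lim[OF assms(6)])
    fix m
    have "cmod (t 0 $ i) \<le> cmod mu ^ m * cmod (t 0 $ i)"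
      using mu1 by (simp add: mult_le_cancel_right1 one_le_power)
    thus "cmod (t 0 $ i) \<le> cmod (t m $ i)" by (simp add: tp[of m] norm_mult norm_power)
  qed
  hence "t 0 = 0" by (simp add: vec_eq_iff)
  thus ?thesis using decay_common[OF assms(1-3)] assms(4) by (simp add: t_def)
qed

lemma decay_left:
  fixes P :: "complex^2^2" and s :: "nat \<Rightarrow> complex^2"
  assumes "cmod (det P) = 1" "P *v v = l *s v" "v \<noteq> 0" "cmod l > 1"
    "\<And>m. s m = P *v s (Suc m)" "\<And>i. (\<lambda>m. s m $ i) \<longlonglongrightarrow> 0"
  shows "\<exists>a. s 0 = a *s v"
proof -
  define mu where "mu = P$1$1 + P$2$2 - l"
  have lm: "l * mu = det P" using charpoly[OF assms(2,3)] by (simp add: mu_def)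
  hence "cmod l * cmod mu = 1" using assms(1) by (metis norm_mult)
  moreover have "cmod l * cmod mu \<ge> cmod l" if "cmod mu \<ge> 1"
    using that mult_left_mono[of 1 "cmod mu" "cmod l"] by simp
  ultimately have mu1: "cmod mu \<le> 1" using assms(4) by linarith
  define t where "t m = P *v s m - l *s s m" for m
  have ts: "t m = mu *s t (Suc m)" for m
    unfolding t_def apply (subst (1 2) assms(5)) unfolding PT_lin PT_key[OF lm mu_def] ..
  have tp: "t 0 = mu ^ m *s t m" for m
  proof (induction m)
    case (Suc m)
    have "t 0 = mu ^ m *s (mu *s t (Suc m))" using Suc ts[of m] by simp
    thus ?case by (simp add: vector_smult_assoc power_Suc2)
  qed simp
  have "t 0 $ i = 0" for i
  proof (rule zero_lim[of "\<lambda>m. t m $ i"])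
    show "(\<lambda>m. t m $ i) \<longlonglongrightarrow> 0" unfolding t_def by (rule t_lim[OF assms(6)])
    fix m
    have "cmod mu ^ m * cmod (t m $ i) \<le> cmod (t m $ i)"
      using mu1 by (simp add: mult_left_le_one_le power_le_one)
    thus "cmod (t 0 $ i) \<le> cmod (t m $ i)" by (subst tp[of m]) (simp add: norm_mult norm_power)
  qed
  hence "t 0 = 0" by (simp add: vec_eq_iff)
  thus ?thesis using decay_common[OF assms(1-3)] assms(4) by (simp add: t_def)
qed

context
  fixes bp bm dp dm c k :: real
  assumes pos: "bp > 0" "bm > 0" "bp + dp > 0" "bm + dm > 0" "c > 0"
begin

abbreviation "H \<equiv> HI bp dp bm dm c k"
abbreviation "B n \<equiv> complex_of_real (bseq bp bm n)"
abbreviation "C n \<equiv> complex_of_real (cseq bp dp bm dm c n)"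
abbreviation "D n \<equiv> complex_of_real (dseq bp dp bm dm n)"

lemma coef_nz: "B n \<noteq> 0" "C n \<noteq> 0" "D n \<noteq> 0"
  using pos by (auto simp: bseq_def cseq_def dseq_def)

lemma H_rows:
  "H u n 1 = - (B n * u n 4 + B n * u n 5 + C (n-1) * cis (-k) * u (n-1) 6)"
  "H u n 2 = - (B n * u n 4 + D n * cis k * u n 5 + B n * u n 6)"
  "H u n 3 = - (C n * u (n+1) 4 + B n * u n 5 + B n * u n 6)"
  "H u n 4 = - (B n * u n 1 + B n * u n 2 + C (n-1) * u (n-1) 3)"
  "H u n 5 = - (B n * u n 1 + D n * cis (-k) * u n 2 + B n * u n 3)"
  "H u n 6 = - (C n * cis k * u (n+1) 1 + B n * u n 2 + B n * u n 3)"
  "j \<notin> {1..6} \<Longrightarrow> H u n j = 0"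
  by (auto simp: HI_def Let_def algebra_simps)

definition Beq :: "(int \<Rightarrow> nat \<Rightarrow> complex) \<Rightarrow> bool" where
  "Beq u \<longleftrightarrow> (\<forall>n. H u n 1 = 0 \<and> H u n 2 = 0 \<and> H u n 3 = 0)"

lemma Beq_E:
  assumes "Beq u"
  shows "B n * u n 4 + B n * u n 5 + C (n-1) * cis (-k) * u (n-1) 6 = 0"
    "B n * u n 4 + D n * cis k * u n 5 + B n * u n 6 = 0"
    "C n * u (n+1) 4 + B n * u n 5 + B n * u n 6 = 0"
  using assms unfolding Beq_def by (metis H_rows(1,2,3) neg_equal_0_iff_equal)+

lemma BD0:
  assumes "Beq w" "w 0 4 = 0" "w (-1) 6 = 0"
  shows "w n 4 = 0 \<and> w n 5 = 0 \<and> w n 6 = 0"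
proof -
  note E = Beq_E[OF assms(1)]
  have st: "w i 4 = 0 \<and> w (i-1) 6 = 0" for i
  proof (induction i rule: int_induct[where k=0])
    case base then show ?case using assms by simp
  next
    case (step1 i)
    have 5: "w i 5 = 0" using E(1)[of i] step1(2) coef_nz by simp
    have 6: "w i 6 = 0" using E(2)[of i] step1(2) 5 coef_nz by simp
    have "w (i+1) 4 = 0" using E(3)[of i] 5 6 coef_nz by simp
    thus ?case using 6 by simp
  next
    case (step2 i)
    have 5: "w (i-1) 5 = 0" using E(3)[of "i-1"] step2(2) coef_nz by simp
    have 4: "w (i-1) 4 = 0" using E(2)[of "i-1"] step2(2) 5 coef_nz by simp
    have "w (i-1-1) 6 = 0" using E(1)[of "i-1"] 4 5 coef_nz by simp
    thus ?case using 4 by simp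
  qed
  have "w n 5 = 0" using E(1)[of n] st[of n] coef_nz by simp
  moreover have "w n 6 = 0" using st[of "n+1"] by simp
  ultimately show ?thesis using st[of n] by simp
qed

lemma Beq_lin:
  assumes "Beq u" "Beq u'"
  shows "Beq (\<lambda>n j. u n j - a * u' n j)"
proof -
  let ?w = "\<lambda>n j. u n j - a * u' n j"
  have "H ?w n 1 = H u n 1 - a * H u' n 1" "H ?w n 2 = H u n 2 - a * H u' n 2" "H ?w n 3 = H u n 3 - a * H u' n 3" for n
    by (simp_all only: H_rows) (simp_all add: algebra_simps)
  thus ?thesis using assms unfolding Beq_def by simp
qed

lemma BD:
  assumes "Beq u" "Beq u'" "u 0 4 = a * u' 0 4" "u (-1) 6 = a * u' (-1) 6" "j \<in> {4,5,6}"
  shows "u n j = a * u' n j"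
  using BD0[OF Beq_lin[OF assms(1,2), of a], of n] assms(3-5) by auto

end

lemma l2_tendsto:
  assumes "u \<in> l2Z6" "inj g"
  shows "(\<lambda>m. u (g m) j) \<longlonglongrightarrow> 0"
proof -
  define f where "f n = (cmod (u n j))\<^sup>2" for n
  have "f summable_on UNIV" unfolding f_def using assms(1) by (simp add: l2Z6_def)
  hence "f summable_on range g" by (rule summable_on_subset_banach) simp
  hence "(f \<circ> g) summable_on UNIV" using summable_on_reindex[of g UNIV f] assms(2) by simp
  hence "summable (f \<circ> g)" using summable_on_UNIV_nonneg_real_iff[of "f \<circ> g"] by (simp add: f_def)
  hence "(f \<circ> g) \<longlonglongrightarrow> 0" by (rule summable_LIMSEQ_zero)
  hence "(\<lambda>m. sqrt (f (g m))) \<longlonglongrightarrow> sqrt 0" by (intro tendsto_real_sqrt) (simp add: o_def)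
  hence "(\<lambda>m. norm (u (g m) j)) \<longlonglongrightarrow> 0" by (simp add: f_def)
  thus ?thesis by (rule tendsto_norm_zero_cancel)
qed

context
  fixes bp bm dp dm c k :: real
  assumes pos: "bp > 0" "bm > 0" "bp + dp > 0" "bm + dm > 0" "c > 0"
begin

lemma BU_right:
  assumes u: "u \<in> l2Z6" "Beq bp bm dp dm c k u"
    and ev: "Pmat bp dp k *v v = l *s v" "v \<noteq> 0" "cmod l < 1"
  shows "\<exists>a. vec2 (u 0 4) (of_real (c / (bp+dp)) * u (-1) 6) = a *s v"
proof -
  define s where "s m = vec2 (u (2 * int m) 4) (if m = 0 then of_real (c / (bp+dp)) * u (-1) 6 else u (2 * int m - 1) 6)" for m
  note E = Beq_E[OF pos u(2)]
  have step: "s (Suc m) = Pmat bp dp k *v s m" for m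
  proof -
    have idx: "2 * int m + 1 + 1 = 2 * int (Suc m)" "2 * int (Suc m) - 1 = 2 * int m + 1" by simp_all
    have e1: "of_real bp * u (2 * int m) 4 + of_real bp * u (2 * int m) 5 + of_real (bp+dp) * cis (-k) * (s m $ 2) = 0"
    proof (cases m)
      case 0
      have r: "(bp + dp) * (c / (bp + dp)) = c" using pos by simp
      have "of_real (bp+dp) * (of_real (c / (bp+dp)) :: complex) = of_real c"
        using arg_cong[OF r, of complex_of_real] by (simp only: of_real_mult)
      hence "of_real (bp+dp) * cis (-k) * (of_real (c / (bp+dp)) * u (-1) 6) = of_real c * cis (-k) * u (-1) 6"
        by (metis mult.assoc mult.commute)
      thus ?thesis using E(1)[of 0] 0 by (simp add: s_def bseq_def cseq_def del: of_real_add)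
    next
      case (Suc m') thus ?thesis using E(1)[of "2 * int m"] by (simp add: s_def bseq_def cseq_def del: of_real_add)
    qed
    have "Pmat bp dp k *v vec2 (u (2 * int m) 4) (s m $ 2) = vec2 (u (2 * int m + 1 + 1) 4) (u (2 * int m + 1) 6)"
    proof (rule chain[OF pos(1,3) e1])
      show "of_real bp * u (2 * int m) 4 + of_real (bp+dp) * cis k * u (2 * int m) 5 + of_real bp * u (2 * int m) 6 = 0"
        using E(2)[of "2 * int m"] by (simp add: bseq_def dseq_def del: of_real_add)
      show "of_real (bp+dp) * u (2 * int m + 1) 4 + of_real bp * u (2 * int m) 5 + of_real bp * u (2 * int m) 6 = 0"
        using E(3)[of "2 * int m"] by (simp add: bseq_def cseq_def del: of_real_add)
      show "of_real bp * u (2 * int m + 1) 4 + of_real bp * u (2 * int m + 1) 5 + of_real (bp+dp) * cis (-k) * u (2 * int m) 6 = 0"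
        using E(1)[of "2 * int m + 1"] by (simp add: bseq_def cseq_def del: of_real_add)
      show "of_real bp * u (2 * int m + 1) 4 + of_real (bp+dp) * cis k * u (2 * int m + 1) 5 + of_real bp * u (2 * int m + 1) 6 = 0"
        using E(2)[of "2 * int m + 1"] by (simp add: bseq_def dseq_def del: of_real_add)
      show "of_real (bp+dp) * u (2 * int m + 1 + 1) 4 + of_real bp * u (2 * int m + 1) 5 + of_real bp * u (2 * int m + 1) 6 = 0"
        using E(3)[of "2 * int m + 1"] by (simp add: bseq_def cseq_def del: of_real_add)
    qed
    moreover have "vec2 (u (2 * int m) 4) (s m $ 2) = s m" by (simp add: s_def vec2_eq)
    moreover have "vec2 (u (2 * int m + 1 + 1) 4) (u (2 * int m + 1) 6) = s (Suc m)"
      unfolding s_def idx by simp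
    ultimately show ?thesis by simp
  qed
  have lim: "(\<lambda>m. s m $ i) \<longlonglongrightarrow> 0" for i
  proof -
    have a: "(\<lambda>m. s m $ 1) \<longlonglongrightarrow> 0"
      unfolding s_def vec2_nth by (rule l2_tendsto[OF u(1)]) (simp add: inj_def)
    have "(\<lambda>m. u (1 + 2 * int m) 6) \<longlonglongrightarrow> 0"
      by (rule l2_tendsto[OF u(1), of "\<lambda>m. 1 + 2 * int m"]) (simp add: inj_def)
    hence "(\<lambda>m. s (Suc m) $ 2) \<longlonglongrightarrow> 0" by (simp add: s_def)
    hence b: "(\<lambda>m. s m $ 2) \<longlonglongrightarrow> 0" by (rule LIMSEQ_imp_Suc)
    show ?thesis using a b exhaust_2[of i] by auto
  qed
  have "cmod (det (Pmat bp dp k)) = 1" using det_Pmat[OF pos(1,3)] by (simp add: norm_mult)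
  from decay_right[OF this ev step lim] show ?thesis by (simp add: s_def)
qed


lemma BU_left:
  assumes u: "u \<in> l2Z6" "Beq bp bm dp dm c k u"
    and ev: "Pmat bm dm k *v v = l *s v" "v \<noteq> 0" "cmod l > 1"
  shows "\<exists>a. vec2 (of_real (c / (bm+dm)) * u 0 4) (u (-1) 6) = a *s v"
proof -
  define s where "s m = vec2 (if m = 0 then of_real (c / (bm+dm)) * u 0 4 else u (-2 * int m) 4) (u (-2 * int m - 1) 6)" for m
  note E = Beq_E[OF pos u(2)]
  have step: "s m = Pmat bm dm k *v s (Suc m)" for m
  proof -
    define n where "n = -2 * int m - 2"
    have i: "-2 * int (Suc m) = n" "-2 * int (Suc m) - 1 = n - 1" "n + 1 - 1 = n" "-2 * int m - 1 = n + 1"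
      by (simp_all add: n_def)
    have co: "bseq bp bm n = bm" "bseq bp bm (n+1) = bm" "cseq bp dp bm dm c (n-1) = bm+dm"
      "cseq bp dp bm dm c n = bm+dm" "dseq bp dp bm dm n = bm+dm" "dseq bp dp bm dm (n+1) = bm+dm"
      by (simp_all add: n_def bseq_def cseq_def dseq_def)
    have e6: "of_real (bm+dm) * (s m $ 1) + of_real bm * u (n+1) 5 + of_real bm * u (n+1) 6 = 0"
    proof (cases m)
      case 0
      have r: "(bm + dm) * (c / (bm + dm)) = c" using pos by simp
      have "of_real (bm+dm) * (of_real (c / (bm+dm)) :: complex) = of_real c"
        using arg_cong[OF r, of complex_of_real] by (simp only: of_real_mult)
      hence "of_real (bm+dm) * (of_real (c / (bm+dm)) * u 0 4) = of_real c * u 0 4"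
        by (metis mult.assoc)
      moreover have "n + 1 = -1" "n + 1 + 1 = 0" using 0 by (simp_all add: n_def)
      ultimately show ?thesis using E(3)[of "n+1"] 0 co by (simp add: s_def bseq_def cseq_def del: of_real_add)
    next
      case (Suc m')
      have "s m $ 1 = u (-2 * int m) 4" using Suc by (simp add: s_def)
      also have "-2 * int m = n + 1 + 1" by (simp add: n_def)
      finally have h1: "s m $ 1 = u (n + 1 + 1) 4" .
      have cc: "cseq bp dp bm dm c (n+1) = bm + dm" using Suc by (simp_all add: n_def cseq_def)
      show ?thesis using E(3)[of "n+1"] unfolding co cc h1[symmetric] .
    qed
    have "Pmat bm dm k *v vec2 (u n 4) (u (n-1) 6) = vec2 (s m $ 1) (u (n + 1) 6)"
    proof (rule chain[OF pos(2,4) _ _ _ _ _ e6])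
      show "of_real bm * u n 4 + of_real bm * u n 5 + of_real (bm+dm) * cis (-k) * u (n-1) 6 = 0"
        using E(1)[of n] co by (simp del: of_real_add)
      show "of_real bm * u n 4 + of_real (bm+dm) * cis k * u n 5 + of_real bm * u n 6 = 0"
        using E(2)[of n] co by (simp del: of_real_add)
      show "of_real (bm+dm) * u (n+1) 4 + of_real bm * u n 5 + of_real bm * u n 6 = 0"
        using E(3)[of n] co by (simp del: of_real_add)
      show "of_real bm * u (n+1) 4 + of_real bm * u (n+1) 5 + of_real (bm+dm) * cis (-k) * u n 6 = 0"
        using E(1)[of "n+1"] co i(3) by (simp del: of_real_add)
      show "of_real bm * u (n+1) 4 + of_real (bm+dm) * cis k * u (n+1) 5 + of_real bm * u (n+1) 6 = 0"
        using E(2)[of "n+1"] co by (simp del: of_real_add)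
    qed
    moreover have "vec2 (u n 4) (u (n-1) 6) = s (Suc m)" unfolding s_def i by simp
    moreover have "vec2 (s m $ 1) (u (n + 1) 6) = s m" unfolding s_def i(4) by (simp add: vec2_eq)
    ultimately show ?thesis by simp
  qed
  have lim: "(\<lambda>m. s m $ i) \<longlonglongrightarrow> 0" for i
  proof -
    have "(\<lambda>m. u (-2 * int (Suc m)) 4) \<longlonglongrightarrow> 0"
      by (rule l2_tendsto[OF u(1), of "\<lambda>m. -2 * int (Suc m)"]) (simp add: inj_def)
    hence "(\<lambda>m. s (Suc m) $ 1) \<longlonglongrightarrow> 0" by (simp add: s_def)
    hence a: "(\<lambda>m. s m $ 1) \<longlonglongrightarrow> 0" by (rule LIMSEQ_imp_Suc)
    have b: "(\<lambda>m. s m $ 2) \<longlonglongrightarrow> 0"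
      unfolding s_def vec2_nth by (rule l2_tendsto[OF u(1)]) (simp add: inj_def)
    show ?thesis using a b exhaust_2[of i] by auto
  qed
  have "cmod (det (Pmat bm dm k)) = 1" using det_Pmat[OF pos(2,4)] by (simp add: norm_mult)
  from decay_left[OF this ev step lim] show ?thesis by (simp add: s_def)
qed

end

definition Jm :: "real \<Rightarrow> (int \<Rightarrow> nat \<Rightarrow> complex) \<Rightarrow> (int \<Rightarrow> nat \<Rightarrow> complex)" where
  "Jm k u = (\<lambda>n j. if j \<in> {1,2,3} then cis (-(k * of_int n)) * cnj (u n (j+3))
     else if j \<in> {4,5,6} then cnj (cis (k * of_int n) * u n (j-3)) else 0)"

lemma cis_shift: "cis (-(k * of_int (n-1))) = cis (-(k * of_int n)) * cis k"
  "cis (k * of_int (n+1)) = cis (k * of_int n) * cis k"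
  by (simp_all add: cis_mult algebra_simps)

lemma Jm_Jm:
  assumes "u \<in> l2Z6"
  shows "Jm k (Jm k u) = u"
proof (intro ext)
  fix n j
  have z: "j \<notin> {1..6} \<Longrightarrow> u n j = 0" using assms by (auto simp: l2Z6_def)
  have c: "cis (-(k * of_int n)) * cis (k * of_int n) = 1" by (simp add: cis_mult)
  show "Jm k (Jm k u) n j = u n j"
  proof (cases "j \<in> {1,2,3}")
    case True
    have "j + 3 \<in> {4,5,6}" "j + 3 \<notin> {1,2,3}" "j + 3 - 3 = j" using True by auto
    hence "Jm k u n (j+3) = cnj (cis (k * of_int n) * u n j)" unfolding Jm_def by simp
    hence "Jm k (Jm k u) n j = cis (-(k * of_int n)) * (cis (k * of_int n) * u n j)"
      using True unfolding Jm_def by simp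
    thus ?thesis using c by (simp only: mult.assoc[symmetric]) simp
  next
    case f: False
    show ?thesis
    proof (cases "j \<in> {4,5,6}")
      case True
      have "j - 3 \<in> {1,2,3}" "j - 3 + 3 = j" using True by auto
      hence "Jm k u n (j-3) = cis (-(k * of_int n)) * cnj (u n j)" unfolding Jm_def by simp
      hence "Jm k (Jm k u) n j = cnj (cis (k * of_int n) * (cis (-(k * of_int n)) * cnj (u n j)))"
        using True f unfolding Jm_def by simp
      also have "\<dots> = cnj ((cis (-(k * of_int n)) * cis (k * of_int n)) * cnj (u n j))"
        by (simp only: mult.assoc mult.left_commute)
      finally show ?thesis using c by simp
    next
      case False thus ?thesis using f z unfolding Jm_def by auto
    qed
  qed
qed

lemma Jm_l2:
  assumes "u \<in> l2Z6"
  shows "Jm k u \<in> l2Z6"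
proof -
  have s: "(\<lambda>n. (cmod (u n j))\<^sup>2) summable_on UNIV" for j using assms by (simp add: l2Z6_def)
  have "(\<lambda>n. (cmod (Jm k u n j))\<^sup>2) summable_on UNIV" for j
  proof -
    have "(\<lambda>n. (cmod (Jm k u n j))\<^sup>2) = (if j \<in> {1,2,3} then (\<lambda>n. (cmod (u n (j+3)))\<^sup>2)
       else if j \<in> {4,5,6} then (\<lambda>n. (cmod (u n (j-3)))\<^sup>2) else (\<lambda>n. 0))"
      by (auto simp: Jm_def norm_mult)
    thus ?thesis using s by simp
  qed
  moreover have "\<forall>n j. j \<notin> {1..6} \<longrightarrow> Jm k u n j = 0" by (auto simp: Jm_def)
  ultimately show ?thesis by (simp add: l2Z6_def)
qed

context
  fixes bp bm dp dm c k :: real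
  assumes pos: "bp > 0" "bm > 0" "bp + dp > 0" "bm + dm > 0" "c > 0"
begin

lemma H_Jm:
  "H bp bm dp dm c k (Jm k u) n 1 = cnj (cis (k * of_int n) * H bp bm dp dm c k u n 4)"
  "H bp bm dp dm c k (Jm k u) n 2 = cnj (cis (k * of_int n) * H bp bm dp dm c k u n 5)"
  "H bp bm dp dm c k (Jm k u) n 3 = cnj (cis (k * of_int n) * H bp bm dp dm c k u n 6)"
  "H bp bm dp dm c k (Jm k u) n 4 = cis (-(k * of_int n)) * cnj (H bp bm dp dm c k u n 1)"
  "H bp bm dp dm c k (Jm k u) n 5 = cis (-(k * of_int n)) * cnj (H bp bm dp dm c k u n 2)"
  "H bp bm dp dm c k (Jm k u) n 6 = cis (-(k * of_int n)) * cnj (H bp bm dp dm c k u n 3)"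
proof -
  have J: "Jm k u n 1 = inverse (cis (k * of_int n)) * cnj (u n 4)" "Jm k u n 2 = inverse (cis (k * of_int n)) * cnj (u n 5)"
    "Jm k u n 3 = inverse (cis (k * of_int n)) * cnj (u n 6)"
    "Jm k u n 4 = inverse (cis (k * of_int n)) * cnj (u n 1)" "Jm k u n 5 = inverse (cis (k * of_int n)) * cnj (u n 2)"
    "Jm k u n 6 = inverse (cis (k * of_int n)) * cnj (u n 3)"
    "Jm k u (n+1) 4 = inverse (cis (k * of_int n)) * inverse (cis k) * cnj (u (n+1) 1)"
    "Jm k u (n-1) 3 = inverse (cis (k * of_int n)) * cis k * cnj (u (n-1) 6)"
    "Jm k u (n-1) 6 = inverse (cis (k * of_int n)) * cis k * cnj (u (n-1) 3)"
    "Jm k u (n+1) 1 = inverse (cis (k * of_int n)) * inverse (cis k) * cnj (u (n+1) 4)"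
    by (simp_all add: Jm_def cis_cnj cis_inverse cis_mult algebra_simps)
  have cc: "cnj (cis (k * of_int n)) = inverse (cis (k * of_int n))" "cnj (cis k) = inverse (cis k)"
    "cis (-(k * of_int n)) = inverse (cis (k * of_int n))" "cis (- k) = inverse (cis k)"
    by (simp_all add: cis_cnj cis_inverse)
  have nz: "cis (k * of_int n) \<noteq> 0" "cis k \<noteq> 0" by simp_all
  have ck: "cis k * cis (-k) = 1" "cis (-k) * cis k = 1" "cis k * (cis (-k) * x) = x" "cis (-k) * (cis k * x) = x"
    "inverse (cis k) * cis k = 1" "cis k * inverse (cis k) = 1" for x
    by (simp_all add: cis_mult mult.assoc[symmetric])
  show "H bp bm dp dm c k (Jm k u) n 1 = cnj (cis (k * of_int n) * H bp bm dp dm c k u n 4)"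
    unfolding H_rows[OF pos] J complex_cnj_mult complex_cnj_add complex_cnj_minus complex_cnj_complex_of_real cc complex_cnj_inverse
    using nz by (simp del: cis_inverse cis_cnj add: field_simps)
  show "H bp bm dp dm c k (Jm k u) n 2 = cnj (cis (k * of_int n) * H bp bm dp dm c k u n 5)"
    unfolding H_rows[OF pos] J complex_cnj_mult complex_cnj_add complex_cnj_minus complex_cnj_complex_of_real cc complex_cnj_inverse
    using nz by (simp del: cis_inverse cis_cnj add: field_simps)
  show "H bp bm dp dm c k (Jm k u) n 3 = cnj (cis (k * of_int n) * H bp bm dp dm c k u n 6)"
    unfolding H_rows[OF pos] J complex_cnj_mult complex_cnj_add complex_cnj_minus complex_cnj_complex_of_real cc complex_cnj_inverse
    using nz by (simp del: cis_inverse cis_cnj add: field_simps)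
  show "H bp bm dp dm c k (Jm k u) n 4 = cis (-(k * of_int n)) * cnj (H bp bm dp dm c k u n 1)"
    unfolding H_rows[OF pos] J complex_cnj_mult complex_cnj_add complex_cnj_minus complex_cnj_complex_of_real cc complex_cnj_inverse
    using nz by (simp del: cis_inverse cis_cnj add: field_simps)
  show "H bp bm dp dm c k (Jm k u) n 5 = cis (-(k * of_int n)) * cnj (H bp bm dp dm c k u n 2)"
    unfolding H_rows[OF pos] J complex_cnj_mult complex_cnj_add complex_cnj_minus complex_cnj_complex_of_real cc complex_cnj_inverse
    using nz by (simp del: cis_inverse cis_cnj add: field_simps)
  show "H bp bm dp dm c k (Jm k u) n 6 = cis (-(k * of_int n)) * cnj (H bp bm dp dm c k u n 3)"
    unfolding H_rows[OF pos] J complex_cnj_mult complex_cnj_add complex_cnj_minus complex_cnj_complex_of_real cc complex_cnj_inverse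
    using nz by (simp del: cis_inverse cis_cnj add: field_simps)
qed

lemma ker_Jm:
  assumes "u \<in> kerHI bp dp bm dm c k"
  shows "Jm k u \<in> kerHI bp dp bm dm c k"
proof -
  have u: "u \<in> l2Z6" "\<And>n j. H bp bm dp dm c k u n j = 0" using assms by (auto simp: kerHI_def)
  have "H bp bm dp dm c k (Jm k u) n j = 0" for n j
  proof -
    consider "j = 1" | "j = 2" | "j = 3" | "j = 4" | "j = 5" | "j = 6" | "j \<notin> {1..6}" by force
    thus ?thesis
    proof cases
      case 1 thus ?thesis by (simp only: H_Jm u(2)) simp
    next
      case 2 thus ?thesis by (simp only: H_Jm u(2)) simp
    next
      case 3 thus ?thesis by (simp only: H_Jm u(2)) simp
    next
      case 4 thus ?thesis by (simp only: H_Jm u(2)) simp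
    next
      case 5 thus ?thesis by (simp only: H_Jm u(2)) simp
    next
      case 6 thus ?thesis by (simp only: H_Jm u(2)) simp
    next
      case 7 thus ?thesis by (simp add: H_rows(7)[OF pos])
    qed
  qed
  thus ?thesis using Jm_l2[OF u(1)] by (auto simp: kerHI_def)
qed

end

definition Gs :: "real \<Rightarrow> real \<Rightarrow> real \<Rightarrow> complex \<Rightarrow> complex^2 \<Rightarrow> int \<Rightarrow> nat \<Rightarrow> complex" where
  "Gs b e k l v n j = (let w1 = M1 b e k *v v; w2 = M2 b e k *v w1 in
     l powi (n div 2) * (if even n then (if j = 4 then v$1 else if j = 5 then w1$2 else if j = 6 then w1$1 else 0)
        else (if j = 4 then w2$2 else if j = 5 then w2$1 else if j = 6 then l * v$2 else 0)))"

lemma Gs_even: "Gs b e k l v (2*m) j = l powi m * (if j = 4 then v$1 else if j = 5 then (M1 b e k *v v)$2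
   else if j = 6 then (M1 b e k *v v)$1 else 0)"
  by (simp add: Gs_def Let_def)

lemma Gs_odd: "Gs b e k l v (2*m+1) j = l powi m * (if j = 4 then (M2 b e k *v (M1 b e k *v v))$2
   else if j = 5 then (M2 b e k *v (M1 b e k *v v))$1 else if j = 6 then l * v$2 else 0)"
proof -
  have "(2*m+1) div 2 = m" by simp
  moreover have "odd (2*m+1)" by simp
  ultimately show ?thesis by (simp only: Gs_def Let_def) simp
qed

lemma fac3: "p * (L * a) + q * (L * b) + r * (L * c) = (L::complex) * (p*a + q*b + r*c)"
  by (simp add: algebra_simps)

lemma Gs_bulk:
  fixes b e k :: real and l :: complex and v :: "complex^2"
  assumes "b > 0" "b + e > 0" "l \<noteq> 0" "Pmat b e k *v v = l *s v"
  shows "of_real b * Gs b e k l v n 4 + of_real b * Gs b e k l v n 5 + of_real (b+e) * cis (-k) * Gs b e k l v (n-1) 6 = 0"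
    "of_real b * Gs b e k l v n 4 + of_real (b+e) * cis k * Gs b e k l v n 5 + of_real b * Gs b e k l v n 6 = 0"
    "of_real (b+e) * Gs b e k l v (n+1) 4 + of_real b * Gs b e k l v n 5 + of_real b * Gs b e k l v n 6 = 0"
proof -
  note R = chain_rev[OF assms(1,2), where k=k and v=v]
  have P1: "(Pmat b e k *v v)$1 = l * v$1" "(Pmat b e k *v v)$2 = l * v$2" using assms(4) by (simp_all add: vec2_eq)
  let ?w1 = "M1 b e k *v v" and ?w2 = "M2 b e k *v (M1 b e k *v v)"
  have pm: "l powi (m - 1) * (l * z) = l powi m * z" for m z
    using assms(3) by (simp add: power_int_diff field_simps)
  have pp: "l powi (m + 1) = l powi m * l" for m
    using assms(3) by (simp add: power_int_add)
  consider m where "n = 2*m" | m where "n = 2*m+1" by (metis evenE oddE)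
  hence "(of_real b * Gs b e k l v n 4 + of_real b * Gs b e k l v n 5 + of_real (b+e) * cis (-k) * Gs b e k l v (n-1) 6 = 0) \<and>
    (of_real b * Gs b e k l v n 4 + of_real (b+e) * cis k * Gs b e k l v n 5 + of_real b * Gs b e k l v n 6 = 0) \<and>
    (of_real (b+e) * Gs b e k l v (n+1) 4 + of_real b * Gs b e k l v n 5 + of_real b * Gs b e k l v n 6 = 0)"
  proof cases
    case 1
    have i: "2*m - 1 = 2*(m-1) + 1" "2*m+1 = 2*m+1" by simp_all
    have g: "Gs b e k l v n 4 = l powi m * v$1" "Gs b e k l v n 5 = l powi m * ?w1$2" "Gs b e k l v n 6 = l powi m * ?w1$1"
      "Gs b e k l v (n-1) 6 = l powi m * v$2" "Gs b e k l v (n+1) 4 = l powi m * ?w2$2"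
      unfolding 1 Gs_even i(1) Gs_odd by (simp_all add: pm)
    show ?thesis unfolding g fac3 using R(1,2,3) by simp
  next
    case 2
    have i: "2*m+1 - 1 = 2*m" "2*m+1+1 = 2*(m+1)" by simp_all
    have g: "Gs b e k l v n 4 = l powi m * ?w2$2" "Gs b e k l v n 5 = l powi m * ?w2$1" "Gs b e k l v n 6 = l powi m * (l * v$2)"
      "Gs b e k l v (n-1) 6 = l powi m * ?w1$1" "Gs b e k l v (n+1) 4 = l powi m * (l * v$1)"
      unfolding 2 Gs_even i Gs_odd by (simp_all add: pp)
    show ?thesis unfolding g fac3 using R(4,5,6) unfolding P1 by simp
  qed
  thus "of_real b * Gs b e k l v n 4 + of_real b * Gs b e k l v n 5 + of_real (b+e) * cis (-k) * Gs b e k l v (n-1) 6 = 0"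
    "of_real b * Gs b e k l v n 4 + of_real (b+e) * cis k * Gs b e k l v n 5 + of_real b * Gs b e k l v n 6 = 0"
    "of_real (b+e) * Gs b e k l v (n+1) 4 + of_real b * Gs b e k l v n 5 + of_real b * Gs b e k l v n 6 = 0"
    by blast+
qed

lemma Gs_base:
  assumes "l \<noteq> 0"
  shows "Gs b e k l v 0 4 = v$1" "Gs b e k l v (-1) 6 = v$2"
proof -
  show "Gs b e k l v 0 4 = v$1" using Gs_even[of b e k l v 0 4] by simp
  have "Gs b e k l v (2*(-1)+1) 6 = l powi (-1) * (l * v$2)" by (simp only: Gs_odd) simp
  thus "Gs b e k l v (-1) 6 = v$2" using assms by (simp add: power_int_minus)
qed

lemma int_split_summable:
  fixes f :: "int \<Rightarrow> real"
  assumes "\<And>n. f n \<ge> 0" "summable (\<lambda>m. f (int m))" "summable (\<lambda>m. f (- int m - 1))"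
  shows "f summable_on UNIV"
proof -
  have a: "f summable_on range int"
    using summable_on_reindex[of int UNIV f] summable_on_UNIV_nonneg_real_iff[of "f \<circ> int"] assms(1,2)
    by (simp add: o_def)
  have inj: "inj (\<lambda>m::nat. - int m - 1)" by (simp add: inj_def)
  have b: "f summable_on range (\<lambda>m::nat. - int m - 1)"
    using summable_on_reindex[OF inj[unfolded inj_on_def[symmetric]] , of f]
      summable_on_UNIV_nonneg_real_iff[of "f \<circ> (\<lambda>m::nat. - int m - 1)"] assms(1,3)
    by (simp add: o_def)
  have d: "range int \<inter> range (\<lambda>m::nat. - int m - 1) = {}" by auto
  have "n \<in> range int \<union> range (\<lambda>m::nat. - int m - 1)" for n
  proof (cases "n \<ge> 0")
    case True then have "n = int (nat n)" by simp
    thus ?thesis by blast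
  next
    case False then have "n = - int (nat (-n-1)) - 1" by simp
    thus ?thesis by blast
  qed
  hence u: "range int \<union> range (\<lambda>m::nat. - int m - 1) = UNIV" by blast
  show ?thesis using summable_on_Un_disjoint[OF a b d] u by simp
qed

lemma geo_div2:
  fixes r :: real
  assumes "0 \<le> r" "r < 1"
  shows "summable (\<lambda>m::nat. r ^ (m div 2))"
proof -
  define t where "t = sqrt (max r (1/2))"
  have t: "0 < t" "t < 1" "r \<le> t\<^sup>2" using assms by (auto simp: t_def)
  have "summable (\<lambda>m. t ^ m / t)" using t by (intro summable_divide summable_geometric) simp
  moreover have "norm (r ^ (m div 2)) \<le> t ^ m / t" for m
  proof -
    have "r ^ (m div 2) \<le> (t\<^sup>2) ^ (m div 2)" using assms t by (intro power_mono) auto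
    also have "\<dots> = t ^ (2 * (m div 2))" by (simp add: power_mult)
    also have "\<dots> = t ^ (2 * (m div 2) + 1) / t" using t by simp
    also have "\<dots> \<le> t ^ m / t"
    proof -
      have m: "m \<le> 2 * (m div 2) + 1" by presburger
      show ?thesis using t m by (intro divide_right_mono power_decreasing) auto
    qed
    finally show ?thesis using assms by simp
  qed
  ultimately show ?thesis by (rule summable_comparison_test'[where N=0])
qed

lemma Gs_bound:
  "cmod (Gs b e k l v n j) \<le> cmod l powi (n div 2) *
     (cmod (v$1) + cmod (v$2) + cmod ((M1 b e k *v v)$1) + cmod ((M1 b e k *v v)$2)
      + cmod ((M2 b e k *v (M1 b e k *v v))$1) + cmod ((M2 b e k *v (M1 b e k *v v))$2) + cmod l * cmod (v$2))"
proof -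
  have "cmod (if even n then (if j = 4 then v$1 else if j = 5 then (M1 b e k *v v)$2 else if j = 6 then (M1 b e k *v v)$1 else 0)
        else (if j = 4 then (M2 b e k *v (M1 b e k *v v))$2 else if j = 5 then (M2 b e k *v (M1 b e k *v v))$1 else if j = 6 then l * v$2 else 0))
     \<le> (cmod (v$1) + cmod (v$2) + cmod ((M1 b e k *v v)$1) + cmod ((M1 b e k *v v)$2)
      + cmod ((M2 b e k *v (M1 b e k *v v))$1) + cmod ((M2 b e k *v (M1 b e k *v v))$2) + cmod l * cmod (v$2))"
    by (auto simp: norm_mult)
  thus ?thesis unfolding Gs_def Let_def norm_mult norm_power_int
    by (intro mult_left_mono) (auto simp: power_int_def)
qed

definition Vf :: "real \<Rightarrow> real \<Rightarrow> real \<Rightarrow> real \<Rightarrow> real \<Rightarrow> real \<Rightarrow> complex \<Rightarrow> complex \<Rightarrow> complex \<Rightarrow> complex^2 \<Rightarrow> complex^2 \<Rightarrow> int \<Rightarrow> nat \<Rightarrow> complex" where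
  "Vf bp bm dp dm c k l1 l2 g v1 v2 n j = (if j \<in> {4,5,6} then (if n \<ge> 0 then Gs bp dp k l1 v1 n j
      else of_real (c/(bm+dm)) * g * Gs bm dm k l2 v2 n j) else 0)"

lemma Beq_I:
  assumes "\<And>n. of_real (bseq bp bm n) * u n 4 + of_real (bseq bp bm n) * u n 5 + of_real (cseq bp dp bm dm c (n-1)) * cis (-k) * u (n-1) 6 = 0"
    "\<And>n. of_real (bseq bp bm n) * u n 4 + of_real (dseq bp dp bm dm n) * cis k * u n 5 + of_real (bseq bp bm n) * u n 6 = 0"
    "\<And>n. of_real (cseq bp dp bm dm c n) * u (n+1) 4 + of_real (bseq bp bm n) * u n 5 + of_real (bseq bp bm n) * u n 6 = 0"
    and pos: "bp > 0" "bm > 0" "bp + dp > 0" "bm + dm > 0" "c > 0"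
  shows "Beq bp bm dp dm c k u"
  unfolding Beq_def[OF pos] H_rows[OF pos] using assms(1-3) by simp


lemma sq_bound:
  assumes "cmod z \<le> A * K" "0 \<le> A"
  shows "(cmod z)\<^sup>2 \<le> K\<^sup>2 * A\<^sup>2"
proof -
  have "(cmod z)\<^sup>2 \<le> (A * K)\<^sup>2" using assms by (intro power_mono) auto
  thus ?thesis by (simp add: power_mult_distrib mult.commute)
qed

lemma summ_from_bound:
  fixes f :: "nat \<Rightarrow> real"
  assumes "\<And>m. 0 \<le> f m" "\<And>m. f m \<le> Cc * r ^ (m div 2)" "0 \<le> r" "r < 1"
  shows "summable f"
proof (rule summable_comparison_test'[where N=0])
  show "summable (\<lambda>m. Cc * r ^ (m div 2))" by (intro summable_mult geo_div2 assms(3,4))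
  show "norm (f m) \<le> Cc * r ^ (m div 2)" for m using assms(1,2)[of m] by simp
qed

lemma idx_left: "(- int m - 1) div 2 = - int (m div 2) - 1"
  by presburger

lemma powi_left:
  fixes x :: real
  assumes "x > 1"
  shows "x powi (- int q - 1) \<le> (inverse x) ^ q"
proof -
  have "x powi (- int q - 1) = inverse x ^ (q + 1)" by (simp add: power_int_def nat_add_distrib)
  also have "\<dots> = inverse x ^ q * inverse x" by simp
  also have "\<dots> \<le> inverse x ^ q" using assms by (intro mult_left_le) (auto simp: field_simps)
  finally show ?thesis .
qed

context
  fixes bp bm dp dm c k :: real and l1 l2 g :: complex and v1 v2 :: "complex^2"
  assumes pos: "bp > 0" "bm > 0" "bp + dp > 0" "bm + dm > 0" "c > 0"
    and ev1: "l1 \<noteq> 0" "cmod l1 < 1" "Pmat bp dp k *v v1 = l1 *s v1"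
    and ev2: "cmod l2 > 1" "Pmat bm dm k *v v2 = l2 *s v2"
    and mt: "v1$1 = g * v2$1" "of_real ((bp+dp)*(bm+dm)/c\<^sup>2) * v1$2 = g * v2$2"
begin

abbreviation "V \<equiv> Vf bp bm dp dm c k l1 l2 g v1 v2"
abbreviation "G1 \<equiv> Gs bp dp k l1 v1"
abbreviation "G2 \<equiv> Gs bm dm k l2 v2"
abbreviation "beta \<equiv> of_real (c/(bm+dm)) * g"

lemma l2nz: "l2 \<noteq> 0" using ev2 by auto

lemma keys: "of_real c * (beta * v2$2) = of_real (bp+dp) * v1$2"
  "of_real c * v1$1 = of_real (bm+dm) * (beta * v2$1)"
proof -
  have rl: "ss \<noteq> 0 \<Longrightarrow> xx \<noteq> 0 \<Longrightarrow> xx * (xx / ss) * (pp * ss / xx\<^sup>2) = (pp::real)" for ss xx pp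
    by (simp add: field_simps power2_eq_square)
  have r1: "c * (c/(bm+dm)) * ((bp+dp)*(bm+dm)/c\<^sup>2) = bp+dp" using pos by (intro rl) auto
  have "of_real c * (beta * v2$2) = of_real c * of_real (c/(bm+dm)) * (g * v2$2)" by (simp add: algebra_simps)
  also have "\<dots> = of_real (c * (c/(bm+dm)) * ((bp+dp)*(bm+dm)/c\<^sup>2)) * v1$2" unfolding mt(2)[symmetric]
    by (simp only: of_real_mult mult.assoc)
  finally show "of_real c * (beta * v2$2) = of_real (bp+dp) * v1$2" unfolding r1 .
  have r2: "(bm+dm) * (c/(bm+dm)) = c" using pos by simp
  have "of_real (bm+dm) * (beta * v2$1) = of_real ((bm+dm) * (c/(bm+dm))) * (g * v2$1)"
    by (simp only: of_real_mult mult.assoc)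
  thus "of_real c * v1$1 = of_real (bm+dm) * (beta * v2$1)" unfolding r2 mt(1) by simp
qed

lemma V_Beq: "Beq bp bm dp dm c k V"
proof (rule Beq_I[OF _ _ _ pos])
  note B1 = Gs_bulk[OF pos(1,3) ev1(1,3)] and B2 = Gs_bulk[OF pos(2,4) l2nz ev2(2)]
  note base1 = Gs_base[OF ev1(1), of bp dp k v1] and base2 = Gs_base[OF l2nz, of bm dm k v2]
  fix n :: int
  consider "n \<ge> 1" | "n = 0" | "n = -1" | "n \<le> -2" by linarith
  hence "(of_real (bseq bp bm n) * V n 4 + of_real (bseq bp bm n) * V n 5 + of_real (cseq bp dp bm dm c (n-1)) * cis (-k) * V (n-1) 6 = 0) \<and>
    (of_real (bseq bp bm n) * V n 4 + of_real (dseq bp dp bm dm n) * cis k * V n 5 + of_real (bseq bp bm n) * V n 6 = 0) \<and>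
    (of_real (cseq bp dp bm dm c n) * V (n+1) 4 + of_real (bseq bp bm n) * V n 5 + of_real (bseq bp bm n) * V n 6 = 0)"
  proof cases
    case 1
    thus ?thesis using B1[of n] by (simp add: Vf_def bseq_def cseq_def dseq_def del: of_real_add)
  next
    case 2
    have v6: "V (-1) 6 = beta * v2$2" by (simp add: Vf_def base2)
    have cs: "cseq bp dp bm dm c (-1) = c" by (simp add: cseq_def)
    have "of_real (cseq bp dp bm dm c (-1)) * cis (-k) * V (-1) 6 = cis (-k) * (of_real c * (beta * v2$2))"
      unfolding v6 cs by (simp add: algebra_simps del: of_real_add)
    also have "\<dots> = of_real (bp+dp) * cis (-k) * G1 (-1) 6"
      unfolding keys(1) base1 by (simp add: algebra_simps del: of_real_add)
    finally have "of_real (cseq bp dp bm dm c (-1)) * cis (-k) * V (-1) 6 = of_real (bp+dp) * cis (-k) * G1 (-1) 6" .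
    thus ?thesis using 2 B1[of 0] by (simp add: Vf_def bseq_def cseq_def dseq_def del: of_real_add)
  next
    case 3
    have "of_real (cseq bp dp bm dm c (-1)) * V 0 4 = of_real (bm+dm) * (beta * G2 0 4)"
      using keys(2) by (simp add: Vf_def cseq_def base1 base2 del: of_real_add)
    moreover have "of_real (bm + dm) * (beta * G2 0 4) + of_real bm * (beta * G2 (-1) 5) + of_real bm * (beta * G2 (-1) 6) = 0"
      unfolding fac3 using B2(3)[of "-1"] by simp
    moreover have "of_real bm * (beta * G2 (-1) 4) + of_real bm * (beta * G2 (-1) 5) + (of_real (bm+dm) * cis (-k)) * (beta * G2 (-2) 6) = 0"
      unfolding fac3 using B2(1)[of "-1"] by simp
    moreover have "of_real bm * (beta * G2 (-1) 4) + (of_real (bm+dm) * cis k) * (beta * G2 (-1) 5) + of_real bm * (beta * G2 (-1) 6) = 0"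
      unfolding fac3 using B2(2)[of "-1"] by simp
    ultimately show ?thesis using 3 by (simp add: Vf_def bseq_def cseq_def dseq_def mult.assoc del: of_real_add)
  next
    case 4
    have "of_real bm * (beta * G2 n 4) + of_real bm * (beta * G2 n 5) + (of_real (bm+dm) * cis (-k)) * (beta * G2 (n-1) 6) = 0"
      unfolding fac3 using B2(1)[of n] by simp
    moreover have "of_real bm * (beta * G2 n 4) + (of_real (bm+dm) * cis k) * (beta * G2 n 5) + of_real bm * (beta * G2 n 6) = 0"
      unfolding fac3 using B2(2)[of n] by simp
    moreover have "of_real (bm+dm) * (beta * G2 (n+1) 4) + of_real bm * (beta * G2 n 5) + of_real bm * (beta * G2 n 6) = 0"
      unfolding fac3 using B2(3)[of n] by simp
    ultimately show ?thesis using 4 by (simp add: Vf_def bseq_def cseq_def dseq_def mult.assoc del: of_real_add)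
  qed
  thus "of_real (bseq bp bm n) * V n 4 + of_real (bseq bp bm n) * V n 5 + of_real (cseq bp dp bm dm c (n-1)) * cis (-k) * V (n-1) 6 = 0"
    "of_real (bseq bp bm n) * V n 4 + of_real (dseq bp dp bm dm n) * cis k * V n 5 + of_real (bseq bp bm n) * V n 6 = 0"
    "of_real (cseq bp dp bm dm c n) * V (n+1) 4 + of_real (bseq bp bm n) * V n 5 + of_real (bseq bp bm n) * V n 6 = 0"
    by blast+
qed


lemma V_zero: "j \<notin> {4,5,6} \<Longrightarrow> V n j = 0" by (simp add: Vf_def)

lemma V_l2: "V \<in> l2Z6"
proof -
  have "(\<lambda>n. (cmod (V n j))\<^sup>2) summable_on UNIV" for j
  proof (cases "j \<in> {4,5,6}")
    case False thus ?thesis by (simp add: V_zero)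
  next
    case True
    define K1 where "K1 = cmod (v1$1) + cmod (v1$2) + cmod ((M1 bp dp k *v v1)$1) + cmod ((M1 bp dp k *v v1)$2)
      + cmod ((M2 bp dp k *v (M1 bp dp k *v v1))$1) + cmod ((M2 bp dp k *v (M1 bp dp k *v v1))$2) + cmod l1 * cmod (v1$2)"
    define K2 where "K2 = cmod (v2$1) + cmod (v2$2) + cmod ((M1 bm dm k *v v2)$1) + cmod ((M1 bm dm k *v v2)$2)
      + cmod ((M2 bm dm k *v (M1 bm dm k *v v2))$1) + cmod ((M2 bm dm k *v (M1 bm dm k *v v2))$2) + cmod l2 * cmod (v2$2)"
    show ?thesis
    proof (rule int_split_summable)
      show "summable (\<lambda>m. (cmod (V (int m) j))\<^sup>2)"
      proof (rule summ_from_bound)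
        fix m :: nat
        have "cmod (V (int m) j) = cmod (G1 (int m) j)" using True by (simp add: Vf_def)
        also have "\<dots> \<le> cmod l1 powi (int m div 2) * K1" unfolding K1_def by (rule Gs_bound)
        also have "cmod l1 powi (int m div 2) = cmod l1 ^ (m div 2)"
        proof -
          have e: "int m div 2 = int (m div 2)" by (simp add: zdiv_int)
          show ?thesis by (simp only: e power_int_of_nat)
        qed
        finally have "cmod (V (int m) j) \<le> cmod l1 ^ (m div 2) * K1" .
        hence "(cmod (V (int m) j))\<^sup>2 \<le> K1\<^sup>2 * (cmod l1 ^ (m div 2))\<^sup>2"
          by (rule sq_bound) simp
        thus "(cmod (V (int m) j))\<^sup>2 \<le> K1\<^sup>2 * ((cmod l1)\<^sup>2) ^ (m div 2)"
          by (simp add: power_mult[symmetric] mult.commute)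
      next
        show "0 \<le> (cmod l1)\<^sup>2" by simp
        show "(cmod l1)\<^sup>2 < 1" using ev1(2) by (simp add: power_less_one_iff abs_square_less_1)
      qed simp
    next
      show "summable (\<lambda>m. (cmod (V (- int m - 1) j))\<^sup>2)"
      proof (rule summ_from_bound)
        fix m :: nat
        have "V (- int m - 1) j = beta * G2 (- int m - 1) j" using True by (simp add: Vf_def)
        hence eqV: "cmod (V (- int m - 1) j) = cmod beta * cmod (G2 (- int m - 1) j)" by (simp only: norm_mult)
        have "cmod (G2 (- int m - 1) j) \<le> cmod l2 powi ((- int m - 1) div 2) * K2" unfolding K2_def by (rule Gs_bound)
        also have "\<dots> \<le> inverse (cmod l2) ^ (m div 2) * K2"
          unfolding idx_left using powi_left[OF ev2(1)] by (intro mult_right_mono) (auto simp: K2_def)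
        finally have g2b: "cmod (G2 (- int m - 1) j) \<le> inverse (cmod l2) ^ (m div 2) * K2" .
        have "cmod (V (- int m - 1) j) \<le> cmod beta * (inverse (cmod l2) ^ (m div 2) * K2)"
          unfolding eqV by (rule mult_left_mono[OF g2b]) simp
        hence "cmod (V (- int m - 1) j) \<le> inverse (cmod l2) ^ (m div 2) * (cmod beta * K2)"
          by (simp add: algebra_simps)
        hence "(cmod (V (- int m - 1) j))\<^sup>2 \<le> (cmod beta * K2)\<^sup>2 * (inverse (cmod l2) ^ (m div 2))\<^sup>2"
          by (rule sq_bound) simp
        thus "(cmod (V (- int m - 1) j))\<^sup>2 \<le> (cmod beta * K2)\<^sup>2 * ((inverse (cmod l2))\<^sup>2) ^ (m div 2)"
          by (simp add: power_mult[symmetric] mult.commute)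
      next
        show "0 \<le> (inverse (cmod l2))\<^sup>2" by simp
        have "inverse (cmod l2) < 1" "0 \<le> inverse (cmod l2)" using ev2(1) by (auto simp: inverse_less_1_iff)
        thus "(inverse (cmod l2))\<^sup>2 < 1" by (simp add: power_less_one_iff abs_square_less_1)
      qed simp
    qed simp
  qed
  moreover have "\<forall>n j. j \<notin> {1..6} \<longrightarrow> V n j = 0" by (auto simp: V_zero)
  ultimately show ?thesis by (simp add: l2Z6_def)
qed

lemma V_ker: "V \<in> kerHI bp dp bm dm c k"
proof -
  have B: "Beq bp bm dp dm c k V" by (rule V_Beq)
  have "HI bp dp bm dm c k V n j = 0" for n j
  proof -
    consider "j \<in> {1,2,3}" | "j \<in> {4,5,6}" | "j \<notin> {1..6}" by force
    thus ?thesis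
    proof cases
      case 1 thus ?thesis using B unfolding Beq_def[OF pos] by auto
    next
      case 2 thus ?thesis by (auto simp: H_rows[OF pos] V_zero)
    next
      case 3 thus ?thesis by (simp add: H_rows(7)[OF pos])
    qed
  qed
  thus ?thesis using V_l2 by (auto simp: kerHI_def)
qed

lemma V_vals: "V 0 4 = v1$1" "V (-1) 6 = beta * v2$2" "of_real (c/(bp+dp)) * V (-1) 6 = v1$2"
proof -
  show "V 0 4 = v1$1" by (simp add: Vf_def Gs_base[OF ev1(1)])
  show v6: "V (-1) 6 = beta * v2$2" by (simp add: Vf_def Gs_base[OF l2nz])
  have r: "(c/(bp+dp)) * c = (bp+dp) * ((c/(bp+dp)) * c) / (bp+dp)" using pos by simp
  have "of_real (c/(bp+dp)) * V (-1) 6 = of_real (c/(bp+dp)) * (of_real c * (beta * v2$2)) / of_real c"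
    using pos unfolding v6 by simp
  also have "\<dots> = of_real (c/(bp+dp)) * (of_real (bp+dp) * v1$2) / of_real c" unfolding keys(1) ..
  also have "\<dots> = v1$2" using pos by (simp add: field_simps del: of_real_add)
  finally show "of_real (c/(bp+dp)) * V (-1) 6 = v1$2" .
qed

end

lemma ker_Beq:
  assumes pos: "bp > 0" "bm > 0" "bp + dp > 0" "bm + dm > 0" "c > 0"
    and "u \<in> kerHI bp dp bm dm c k"
  shows "Beq bp bm dp dm c k u" "u \<in> l2Z6"
  using assms(6) unfolding Beq_def[OF pos] kerHI_def by (auto dest: fun_cong)

lemma eig_nz:
  fixes P :: "complex^2^2"
  assumes "cmod (det P) = 1" "P *v v = l *s v" "v \<noteq> 0"
  shows "l \<noteq> 0"
  using charpoly[OF assms(2,3)] assms(1) by auto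

lemma vnz: "(v::complex^2) \<noteq> 0 \<Longrightarrow> v$1 \<noteq> 0 \<or> v$2 \<noteq> 0"
  using vec2_eq[of v 0] by auto

theorem theorem6:
  fixes bp bm dp dm c k :: real and l1 l2 :: complex and v1 v2 :: "complex^2"
  assumes "bp > 0" and "bm > 0" and "bp + dp > 0" and "bm + dm > 0" and "c > 0"
    and "-pi \<le> k" and "k < pi"
    and "k \<noteq> 0 \<or> (dp \<noteq> 0 \<and> dm \<noteq> 0)"
    and "cmod l1 < 1" and "v1 \<noteq> 0" and "Pmat bp dp k *v v1 = l1 *s v1"
    and "cmod l2 > 1" and "v2 \<noteq> 0" and "Pmat bm dm k *v v2 = l2 *s v2"
  shows "cdim_two (kerHI bp dp bm dm c k) \<longleftrightarrow>
    (\<exists>g::complex. g \<noteq> 0 \<and>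
       mat2 1 0 0 (complex_of_real ((bp + dp) * (bm + dm) / c\<^sup>2)) *v v1 = g *s v2)"
proof -
  note pos = assms(1-5)
  have dP1: "cmod (det (Pmat bp dp k)) = 1" using det_Pmat[OF pos(1,3)] by (simp add: norm_mult)
  have l1nz: "l1 \<noteq> 0" by (rule eig_nz[OF dP1 assms(11,10)])
  let ?K = "kerHI bp dp bm dm c k"
  let ?m = "(bp + dp) * (bm + dm) / c\<^sup>2"
  have cpos: "complex_of_real (c/(bp+dp)) \<noteq> 0" "complex_of_real (c/(bm+dm)) \<noteq> 0"
    "complex_of_real ((bm+dm)/c) \<noteq> 0" by (simp_all only: of_real_eq_0_iff) (use pos in auto)
  show ?thesis
  proof
    assume "cdim_two ?K"
    then obtain v w where vw: "v \<in> ?K" "w \<in> ?K"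
      "\<forall>a b::complex. (\<lambda>n j. a * v n j + b * w n j) = (\<lambda>n j. 0) \<longrightarrow> a = 0 \<and> b = 0"
      unfolding cdim_two_def by blast
    have "v \<noteq> (\<lambda>n j. 0)"
    proof
      assume "v = (\<lambda>n j. 0)"
      hence "(\<lambda>n j. 1 * v n j + 0 * w n j) = (\<lambda>n j. 0)" by simp
      thus False using vw(3)[rule_format, of 1 0] by simp
    qed
    then obtain n0 j0 where nz: "v n0 j0 \<noteq> 0" by blast
    have vl2: "v \<in> l2Z6" using vw(1) by (simp add: kerHI_def)
    hence j0: "j0 \<in> {1..6}" using nz unfolding l2Z6_def by blast
    obtain u n1 j1 where u: "u \<in> ?K" "j1 \<in> {4,5,6}" "u n1 j1 \<noteq> 0"
    proof (cases "j0 \<in> {4,5,6}")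
      case True thus ?thesis using that vw(1) nz by blast
    next
      case False
      hence j: "j0 + 3 \<in> {4,5,6}" "j0 + 3 \<notin> {1,2,3}" "j0 + 3 - 3 = j0" using j0 by auto
      have "Jm k v n0 (j0 + 3) = cnj (cis (k * of_int n0) * v n0 j0)" unfolding Jm_def using j by simp
      hence "Jm k v n0 (j0 + 3) \<noteq> 0" using nz by simp
      thus ?thesis using that ker_Jm[OF pos vw(1)] j(1) by blast
    qed
    note uB = ker_Beq[OF pos u(1)]
    have st: "\<not> (u 0 4 = 0 \<and> u (-1) 6 = 0)"
      using BD0[OF pos uB(1), of n1] u(2,3) by auto
    obtain al where al: "vec2 (u 0 4) (of_real (c / (bp+dp)) * u (-1) 6) = al *s v1"
      using BU_right[OF pos uB(2) uB(1) assms(11,10,9)] by blast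
    obtain be where be: "vec2 (of_real (c / (bm+dm)) * u 0 4) (u (-1) 6) = be *s v2"
      using BU_left[OF pos uB(2) uB(1) assms(14,13,12)] by blast
    have h: "u 0 4 = al * v1$1" "of_real (c / (bp+dp)) * u (-1) 6 = al * v1$2"
      "of_real (c / (bm+dm)) * u 0 4 = be * v2$1" "u (-1) 6 = be * v2$2"
      using al be unfolding vec2_eq by auto
    have alnz: "al \<noteq> 0" using h(1,2) st cpos by auto
    have benz: "be \<noteq> 0" using h(3,4) st cpos by auto
    define g where "g = of_real ((bm+dm)/c) * be / al"
    have ra: "(bm+dm)/c * (c/(bm+dm)) = 1" using pos by simp
    have rl: "ss \<noteq> 0 \<Longrightarrow> xx \<noteq> 0 \<Longrightarrow> ss * qq / xx\<^sup>2 * (xx / ss) = qq / (xx::real)" for ss xx qq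
      by (simp add: field_simps power2_eq_square)
    have rb: "?m * (c/(bp+dp)) = (bm+dm)/c" using pos by (intro rl) auto
    have rac: "complex_of_real ((bm+dm)/c) * complex_of_real (c/(bm+dm)) = 1"
      using arg_cong[OF ra, of complex_of_real] by (simp only: of_real_mult of_real_1)
    have rbc: "complex_of_real ?m * complex_of_real (c/(bp+dp)) = complex_of_real ((bm+dm)/c)"
      using arg_cong[OF rb, of complex_of_real] by (simp only: of_real_mult)
    have e1: "v1$1 = g * v2$1"
    proof -
      have "al * (g * v2$1) = of_real ((bm+dm)/c) * (be * v2$1)" using alnz by (simp add: g_def)
      also have "\<dots> = of_real ((bm+dm)/c) * of_real (c / (bm+dm)) * u 0 4" unfolding h(3)[symmetric] by simp
      also have "\<dots> = al * v1$1" unfolding rac h(1) by simp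
      finally show ?thesis using alnz by simp
    qed
    have e2: "of_real ?m * v1$2 = g * v2$2"
    proof -
      have "al * (g * v2$2) = of_real ((bm+dm)/c) * (be * v2$2)" using alnz by (simp add: g_def)
      also have "\<dots> = of_real ?m * (of_real (c / (bp+dp)) * u (-1) 6)" unfolding h(4)[symmetric] rbc[symmetric]
        by (simp only: mult.assoc)
      also have "\<dots> = al * (of_real ?m * v1$2)" unfolding h(2) by simp
      finally have "al * (g * v2$2) = al * (of_real ?m * v1$2)" .
      thus ?thesis using alnz by (metis mult_left_cancel)
    qed
    show "\<exists>g. g \<noteq> 0 \<and> mat2 1 0 0 (complex_of_real ?m) *v v1 = g *s v2"
    proof (intro exI conjI)
      show "g \<noteq> 0" using alnz benz cpos by (simp add: g_def)
      show "mat2 1 0 0 (complex_of_real ?m) *v v1 = g *s v2"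
        unfolding vec2_eq mat2_mv using e1 e2 by simp
    qed
  next
    assume "\<exists>g. g \<noteq> 0 \<and> mat2 1 0 0 (complex_of_real ?m) *v v1 = g *s v2"
    then obtain g where g: "g \<noteq> 0" "mat2 1 0 0 (complex_of_real ?m) *v v1 = g *s v2" by blast
    have mt: "v1$1 = g * v2$1" "of_real ?m * v1$2 = g * v2$2"
      using g(2) unfolding vec2_eq mat2_mv by simp_all
    note ctx = pos l1nz assms(9,11,12,14) mt
    define V where "V = Vf bp bm dp dm c k l1 l2 g v1 v2"
    define W where "W = Jm k V"
    have VK: "V \<in> ?K" unfolding V_def by (rule V_ker[OF ctx])
    have WK: "W \<in> ?K" unfolding W_def by (rule ker_Jm[OF pos VK])
    note Vv = V_vals[OF ctx, folded V_def]
    have Vz: "j \<notin> {4,5,6} \<Longrightarrow> V n j = 0" for n j unfolding V_def by (rule V_zero[OF ctx])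
    have Wz: "j \<notin> {1,2,3} \<Longrightarrow> W n j = 0" for n j
      unfolding W_def Jm_def using Vz by auto
    have W1: "W n j = cis (-(k * of_int n)) * cnj (V n (j+3))" if "j \<in> {1,2,3}" for n j
      unfolding W_def Jm_def using that by simp
    have Vnz: "V 0 4 \<noteq> 0 \<or> V (-1) 6 \<noteq> 0"
      using vnz[OF assms(10)] Vv by auto
    have indep: "a = 0 \<and> b = 0" if h: "(\<lambda>n j. a * V n j + b * W n j) = (\<lambda>n j. 0)" for a b
    proof -
      have p: "a * V n j + b * W n j = 0" for n j using fun_cong[OF fun_cong[OF h, of n], of j] by simp
      have "a * V 0 4 = 0" "a * V (-1) 6 = 0" using p[of 0 4] p[of "-1" 6] Wz by auto
      hence a: "a = 0" using Vnz by auto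
      have "b * W 0 1 = 0" "b * W (-1) 3 = 0" using p[of 0 1] p[of "-1" 3] Vz by auto
      hence "b * cnj (V 0 4) = 0" "b * cnj (V (-1) 6) = 0" using W1[of 1 0] W1[of 3 "-1"] by auto
      hence "b = 0" using Vnz by auto
      with a show ?thesis by simp
    qed
    have span: "\<exists>a b. u = (\<lambda>n j. a * V n j + b * W n j)" if uK: "u \<in> ?K" for u
    proof -
      have coef: "\<exists>al. \<forall>n j. j \<in> {4,5,6} \<longrightarrow> x n j = al * V n j" if xK: "x \<in> ?K" for x
      proof -
        note xB = ker_Beq[OF pos xK]
        obtain al where al: "vec2 (x 0 4) (of_real (c / (bp+dp)) * x (-1) 6) = al *s v1"
          using BU_right[OF pos xB(2) xB(1) assms(11,10,9)] by blast
        have a1: "x 0 4 = al * v1$1" "of_real (c / (bp+dp)) * x (-1) 6 = al * v1$2"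
          using al unfolding vec2_eq vec2_nth vector_smult_component by auto
        have "x 0 4 = al * V 0 4" using a1(1) Vv(1) by simp
        moreover have "of_real (c / (bp+dp)) * x (-1) 6 = of_real (c / (bp+dp)) * (al * V (-1) 6)"
          using a1(2) unfolding Vv(3)[symmetric] by (simp only: mult.left_commute)
        hence "x (-1) 6 = al * V (-1) 6" using cpos(1) by (metis mult_left_cancel)
        ultimately have "x 0 4 = al * V 0 4" "x (-1) 6 = al * V (-1) 6" by auto
        hence "x n j = al * V n j" if "j \<in> {4,5,6}" for n j
          using BD[OF pos xB(1) ker_Beq(1)[OF pos VK] _ _ that] by blast
        thus ?thesis by blast
      qed
      obtain al where al: "\<forall>n j. j \<in> {4,5,6} \<longrightarrow> u n j = al * V n j" using coef[OF uK] by blast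
      obtain al' where al': "\<forall>n j. j \<in> {4,5,6} \<longrightarrow> Jm k u n j = al' * V n j"
        using coef[OF ker_Jm[OF pos uK]] by blast
      have ul2: "u \<in> l2Z6" using uK by (simp add: kerHI_def)
      have "u n j = al * V n j + cnj al' * W n j" for n j
      proof -
        consider "j \<in> {1,2,3}" | "j \<in> {4,5,6}" | "j \<notin> {1..6}" by force
        thus ?thesis
        proof cases
          case 1
          hence j: "j + 3 \<in> {4,5,6}" by auto
          have "u n j = Jm k (Jm k u) n j" using Jm_Jm[OF ul2] by simp
          also have "\<dots> = cis (-(k * of_int n)) * cnj (Jm k u n (j+3))" unfolding Jm_def using 1 by simp
          also have "\<dots> = cnj al' * W n j" proof - have "Jm k u n (j+3) = al' * V n (j+3)" using al' j by blast thus ?thesis unfolding W1[OF 1] by simp qed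
          finally show ?thesis using Vz[of j n] 1 by auto
        next
          case 2 thus ?thesis using al Wz[of j n] by auto
        next
          case 3
          hence "u n j = 0" using ul2 by (auto simp: l2Z6_def)
          thus ?thesis using 3 Vz[of j n] Wz[of j n] by auto
        qed
      qed
      thus ?thesis by blast
    qed
    show "cdim_two ?K" unfolding cdim_two_def using VK WK indep span by blast
  qed
qed

end
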